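(* Let $n\in\mathbb N$, let $K_1,\dots,K_n$ be singular, strictly concave kernel functions satisfying (PM$_0$), and let $J$ be an $n$-field function satisfying either $J(0)=\lim_{t\downarrow0}J(t)=-\infty$ or $J(1)=\lim_{t\uparrow1}J(t)=-\infty$. Then for every $\mathbf y\in Y$ there is $\delta>0$ such that the Clarke derivative $D_{\mathrm{Clarke}}\Phi(\mathbf x)$ has full rank at every point $\mathbf x$ of $\{\mathbf x:\|\mathbf x-\mathbf y\|<\delta\}$. Consequently $\Phi:Y\to\mathbb R^n$ is a local homeomorphism which is locally bi-Lipschitz.
   Context: A kernel function is a function $K:(-1,0)\cup(0,1)\to\mathbb R$ that is concave on $(-1,0)$ and concave on $(0,1)$ and satisfies $\lim_{t\downarrow0}K(t)=\lim_{t\uparrow0}K(t)$. It is extended to $[-1,1]$ with values in $[-\infty,\infty)$ by its one-sided limits at $-1,0,1$. It is singular if $K(0)=-\infty$. Strictly concave means strictly concave on each of $(-1,0)$ and $(0,1)$. (PM$_0$) means $K'(t)-K'(t-1)\ge0$ for almost every $t\in(0,1)$. An $n$-field function is a function $J:[0,1]\to[-\infty,\infty)$ that is bounded above and whose set of finite values has total weight strictly greater than $n$. Here the points $0$ and $1$ each have weight $1/2$ and every point of $(0,1)$ has weight $1$. $S=\{\mathbf y\in\mathbb R^n:0<y_1<\dots<y_n<1\}$. $F(\mathbf y,t)=J(t)+\sum_iK_i(t-y_i)$. Set $y_0=0$ and $y_{n+1}=1$. Let $I_j(\mathbf y)=[y_j,y_{j+1}]$ and $m_j(\mathbf y)=\sup_{I_j(\mathbf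 y)}F(\mathbf y,\cdot)$. $Y=\{\mathbf y\in S:m_j(\mathbf y)\ne-\infty\ \forall j\}$. $\Phi(\mathbf y)=(m_1(\mathbf y)-m_0(\mathbf y),\dots,m_n(\mathbf y)-m_{n-1}(\mathbf y))$. $\Phi$ is locally Lipschitz on $Y$, hence differentiable almost everywhere. $\|\mathbf v\|=\max_i|v_i|$. For a locally Lipschitz $f:U\to\mathbb R^n$ on an open $U\subseteq\mathbb R^n$, the Clarke derivative $D_{\mathrm{Clarke}}f(\mathbf x_0)$ is the convex hull of the set of all matrices $A$ that are limit points of $(f'(\mathbf x_k))_k$ for some sequence $\mathbf x_k\to\mathbf x_0$ of points where $f$ is differentiable. It has full rank if every matrix in it has rank $n$. *)

theory Defs
  imports "HOL-Analysis.Analysis" "HOL-Library.Extended_Real"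
begin

definition strictly_concave_on :: "real set \<Rightarrow> (real \<Rightarrow> real) \<Rightarrow> bool" where
  "strictly_concave_on S f \<longleftrightarrow> convex S \<and>
     (\<forall>x\<in>S. \<forall>y\<in>S. \<forall>u. x \<noteq> y \<and> 0 < u \<and> u < 1 \<longrightarrow>
        u * f x + (1 - u) * f y < f (u * x + (1 - u) * y))"

(* A kernel function, represented by its extension K : [-1,1] -> [-\<infinity>,\<infinity>)
   (values outside [-1,1] are irrelevant). *)
definition kernel_function :: "(real \<Rightarrow> ereal) \<Rightarrow> bool" where
  "kernel_function K \<longleftrightarrow>
     (\<forall>t\<in>{-1<..<0} \<union> {0<..<1}. \<bar>K t\<bar> \<noteq> \<infinity>) \<and>
     concave_on {-1<..<0} (\<lambda>t. real_of_ereal (K t)) \<and>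
     concave_on {0<..<1} (\<lambda>t. real_of_ereal (K t)) \<and>
     (K \<longlongrightarrow> K 0) (at_right 0) \<and> (K \<longlongrightarrow> K 0) (at_left 0) \<and>
     (K \<longlongrightarrow> K (-1)) (at_right (-1)) \<and> (K \<longlongrightarrow> K 1) (at_left 1)"

definition singular_kernel :: "(real \<Rightarrow> ereal) \<Rightarrow> bool" where
  "singular_kernel K \<longleftrightarrow> K 0 = -\<infinity>"

definition strictly_concave_kernel :: "(real \<Rightarrow> ereal) \<Rightarrow> bool" where
  "strictly_concave_kernel K \<longleftrightarrow>
     strictly_concave_on {-1<..<0} (\<lambda>t. real_of_ereal (K t)) \<and>
     strictly_concave_on {0<..<1} (\<lambda>t. real_of_ereal (K t))"

definition PM0 :: "(real \<Rightarrow> ereal) \<Rightarrow> bool" where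
  "PM0 K \<longleftrightarrow> (AE t in lborel. t \<in> {0<..<1} \<longrightarrow>
      deriv (\<lambda>s. real_of_ereal (K s)) t - deriv (\<lambda>s. real_of_ereal (K s)) (t - 1) \<ge> 0)"

definition weight :: "real set \<Rightarrow> ereal" where
  "weight A = (if finite (A \<inter> {0<..<1})
      then ereal (real (card (A \<inter> {0<..<1})) + (if 0 \<in> A then 1/2 else 0) + (if 1 \<in> A then 1/2 else 0))
      else \<infinity>)"

definition n_field_function :: "nat \<Rightarrow> (real \<Rightarrow> ereal) \<Rightarrow> bool" where
  "n_field_function n J \<longleftrightarrow>
     (\<forall>t\<in>{0..1}. J t \<noteq> \<infinity>) \<and> (\<exists>M. \<forall>t\<in>{0..1}. J t \<le> ereal M) \<and>
     weight {t\<in>{0..1}. J t \<noteq> -\<infinity>} > ereal (real n)"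

(* Positions: the index type 'n (with n = CARD('n) elements) is listed in increasing order. *)
definition idx_pos :: "'n::{finite,linorder} \<Rightarrow> nat" where
  "idx_pos i = card {j. j < i}"   (* 0-based *)

definition idx_of :: "nat \<Rightarrow> 'n::{finite,linorder}" where
  "idx_of k = sorted_list_of_set (UNIV :: 'n set) ! (k - 1)"   (* k = 1..n *)

definition simplexS :: "(real^'n::{finite,linorder}) set" where
  "simplexS = {y. (\<forall>i. 0 < y$i \<and> y$i < 1) \<and> (\<forall>i j. i < j \<longrightarrow> y$i < y$j)}"

definition ypt :: "real^'n::{finite,linorder} \<Rightarrow> nat \<Rightarrow> real" where
  "ypt y k = (if k = 0 then 0 else if k \<ge> CARD('n) + 1 then 1 else y $ idx_of k)"

definition Ffun :: "(real \<Rightarrow> ereal) \<Rightarrow> ('n \<Rightarrow> real \<Rightarrow> ereal)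
                   \<Rightarrow> real^'n::{finite,linorder} \<Rightarrow> real \<Rightarrow> ereal" where
  "Ffun J K y t = J t + (\<Sum>i\<in>UNIV. K i (t - y $ i))"

definition mfun :: "(real \<Rightarrow> ereal) \<Rightarrow> ('n \<Rightarrow> real \<Rightarrow> ereal)
                   \<Rightarrow> nat \<Rightarrow> real^'n::{finite,linorder} \<Rightarrow> ereal" where
  "mfun J K j y = (SUP t\<in>{ypt y j .. ypt y (Suc j)}. Ffun J K y t)"

definition Yset :: "(real \<Rightarrow> ereal) \<Rightarrow> ('n \<Rightarrow> real \<Rightarrow> ereal) \<Rightarrow> (real^'n::{finite,linorder}) set" where
  "Yset J K = {y \<in> simplexS. \<forall>j \<le> CARD('n). mfun J K j y \<noteq> -\<infinity>}"

(* \<Phi>(y)_k = m_k(y) - m_{k-1}(y), k = 1..n; meaningful on Yset *)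
definition Phi :: "(real \<Rightarrow> ereal) \<Rightarrow> ('n \<Rightarrow> real \<Rightarrow> ereal) \<Rightarrow> real^'n::{finite,linorder} \<Rightarrow> real^'n::{finite,linorder}" where
  "Phi J K y = (\<chi> i. real_of_ereal (mfun J K (Suc (idx_pos i)) y) - real_of_ereal (mfun J K (idx_pos i) y))"

definition clarke_derivative :: "(real^'n) set \<Rightarrow> (real^'n \<Rightarrow> real^'m) \<Rightarrow> real^'n \<Rightarrow> (real^'n^'m) set" where
  "clarke_derivative U f x0 = convex hull
     {A. \<exists>xs r. (\<forall>k. xs k \<in> U \<and> f differentiable (at (xs k))) \<and> xs \<longlonglongrightarrow> x0 \<and>
              strict_mono r \<and> (\<lambda>k. matrix (frechet_derivative f (at (xs (r k))))) \<longlonglongrightarrow> A}"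

definition full_rank_set :: "(real^'n^'m) set \<Rightarrow> bool" where
  "full_rank_set D \<longleftrightarrow> (\<forall>A\<in>D. rank A = CARD('n))"

end

theory Submission
  imports Defs
begin

definition sl :: "(real \<Rightarrow> real) \<Rightarrow> real \<Rightarrow> real \<Rightarrow> real" where
  "sl f u v = (f u - f v) / (u - v)"

lemma sl_sym: "sl f u v = sl f v u"
  unfolding sl_def by (simp add: divide_simps) (simp add: algebra_simps)

lemma concave_three:
  assumes c: "concave_on I f" and I: "x \<in> I" "y \<in> I" and t: "x < t" "t < y"
  shows "sl f x t \<ge> sl f x y" "sl f x y \<ge> sl f t y"
proof -
  have cv: "convex_on I (\<lambda>x. - f x)" using c by (simp add: concave_on_def)
  from convex_on_slope_le[OF cv I t]
  have a: "(- f x - - f t) / (x - t) \<le> (- f x - - f y) / (x - y)"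
   and b: "(- f x - - f y) / (x - y) \<le> (- f t - - f y) / (t - y)" by auto
  have e1: "(- f x - - f t) / (x - t) = - sl f x t" by (simp add: sl_def divide_simps)
  have e2: "(- f x - - f y) / (x - y) = - sl f x y" by (simp add: sl_def divide_simps)
  have e3: "(- f t - - f y) / (t - y) = - sl f t y" by (simp add: sl_def divide_simps)
  show "sl f x t \<ge> sl f x y" "sl f x y \<ge> sl f t y" using a b e1 e2 e3 by linarith+
qed

lemma concave_chord_mono:
  assumes c: "concave_on I f" and I: "x \<in> I" "y' \<in> I"
    and xy: "x < y" "x' < y'" "x \<le> x'" "y \<le> y'"
  shows "sl f x y \<ge> sl f x' y'"
proof -
  have cI: "convex I" using c concave_on_imp_convex by blast
  have yI: "y \<in> I" using I xy cI by (meson atMostAtLeast_subset_convex atLeastAtMost_iff less_le_trans order.strict_implies_order subsetD)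
  have x'I: "x' \<in> I" using I xy cI by (meson atMostAtLeast_subset_convex atLeastAtMost_iff less_le_trans order.strict_implies_order subsetD)
  have s1: "sl f x y \<ge> sl f x' y" if "x' < y"
  proof (cases "x = x'")
    case False then have "x < x'" using xy by simp
    from concave_three[OF c I(1) yI this that] sl_sym show ?thesis by (metis order_trans)
  qed simp
  have s2: "sl f x' y \<ge> sl f x' y'" if "x' < y"
  proof (cases "y = y'")
    case False then have "y < y'" using xy by simp
    from concave_three[OF c x'I I(2) that this] show ?thesis by (metis order_trans)
  qed simp
  show ?thesis
  proof (cases "x' < y")
    case True then show ?thesis using s1 s2 by linarith
  next
    case False
    have a: "sl f x y \<ge> sl f y y'"
      using concave_three[OF c I(1) I(2)] xy False by (metis less_le_trans not_less order.trans sl_sym)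
    show ?thesis
    proof (cases "y = x'")
      case True then show ?thesis using a by simp
    next
      case False2: False
      have "y < x'" using False False2 by simp
      have "sl f y y' \<ge> sl f x' y'" using concave_three[OF c yI I(2) \<open>y < x'\<close> xy(2)] by linarith
      then show ?thesis using a by linarith
    qed
  qed
qed

lemma concave_tangent:
  assumes c: "concave_on {a<..<b} f" and cI: "c \<in> {a<..<b}" and xI: "x \<in> {a<..<b}"
    and d: "(f has_real_derivative D) (at c)"
  shows "x < c \<Longrightarrow> sl f x c \<ge> D" "c < x \<Longrightarrow> sl f c x \<le> D"
proof -
  have cv: "convex_on {a<..<b} (\<lambda>x. - f x)" using c by (simp add: concave_on_def)
  have d': "((\<lambda>x. - f x) has_field_derivative - D) (at c within {a<..<b})"
    using d by (auto intro: derivative_eq_intros has_field_derivative_at_within)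
  have "- f x - - f c \<ge> - D * (x - c)"
    by (rule convex_on_imp_above_tangent[OF cv _ _ xI d']) (use cI in auto)
  then have h: "f x - f c \<le> D * (x - c)" by simp
  show "x < c \<Longrightarrow> sl f x c \<ge> D" using h unfolding sl_def by (simp add: divide_simps algebra_simps)
  show "c < x \<Longrightarrow> sl f c x \<le> D" using h unfolding sl_def by (simp add: divide_simps algebra_simps)
qed

definition Dp :: "(real \<Rightarrow> real) \<Rightarrow> real \<Rightarrow> real \<Rightarrow> real" where
  "Dp f b x = (SUP z\<in>{x<..<b}. sl f x z)"
definition Dm :: "(real \<Rightarrow> real) \<Rightarrow> real \<Rightarrow> real \<Rightarrow> real" where
  "Dm f a x = (INF w\<in>{a<..<x}. sl f w x)"

context
  fixes f :: "real \<Rightarrow> real" and a b :: real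
  assumes conc: "concave_on {a<..<b} f"
begin

lemma sl_le_sl:
  assumes "a < w" "w < x" "x < z" "z < b"
  shows "sl f x z \<le> sl f w x"
  using concave_three[OF conc, of w z x] assms by (auto simp: sl_sym)

lemma bddA: assumes "a < x" "x < b" shows "bdd_above ((\<lambda>z. sl f x z) ` {x<..<b})"
proof -
  obtain w where "a < w" "w < x" using assms dense by blast
  then show ?thesis using sl_le_sl assms by (intro bdd_aboveI[of _ "sl f w x"]) auto
qed

lemma bddB: assumes "a < x" "x < b" shows "bdd_below ((\<lambda>w. sl f w x) ` {a<..<x})"
proof -
  obtain z where "x < z" "z < b" using assms dense by blast
  then show ?thesis using sl_le_sl assms by (intro bdd_belowI[of _ "sl f x z"]) auto
qed

lemma Dp_ge: assumes "a < x" "x < z" "z < b" shows "sl f x z \<le> Dp f b x"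
  unfolding Dp_def using bddA assms by (intro cSUP_upper) auto

lemma Dm_le: assumes "a < w" "w < x" "x < b" shows "Dm f a x \<le> sl f w x"
  unfolding Dm_def using bddB assms by (intro cINF_lower) auto

lemma Dp_le: assumes "a < w" "w < x" "x < b" shows "Dp f b x \<le> sl f w x"
  unfolding Dp_def using assms sl_le_sl by (intro cSUP_least) auto

lemma Dp_le_Dm: assumes "a < x" "x < b" shows "Dp f b x \<le> Dm f a x"
proof -
  have "Dp f b x \<le> sl f w x" if "w \<in> {a<..<x}" for w using Dp_le that assms by auto
  then show ?thesis unfolding Dm_def using assms by (intro cINF_greatest) auto
qed

lemma Dp_approx:
  assumes "a < x" "x < b" "e > 0"
  shows "\<exists>z>x. z < b \<and> (\<forall>z'. x < z' \<and> z' \<le> z \<longrightarrow> sl f x z' \<ge> Dp f b x - e)"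
proof -
  have ne: "{x<..<b} \<noteq> {}" using assms by auto
  obtain z where z: "z \<in> {x<..<b}" "sl f x z > Dp f b x - e"
    using less_cSUP_iff[OF ne bddA[OF assms(1,2)], of "Dp f b x - e"] assms(3)
    unfolding Dp_def by auto
  show ?thesis
  proof (intro exI conjI allI impI)
    fix z' assume "x < z' \<and> z' \<le> z"
    then have "sl f x z' \<ge> sl f x z"
      using concave_chord_mono[OF conc, of x z z' x] z assms by auto
    then show "sl f x z' \<ge> Dp f b x - e" using z by linarith
  qed (use z in auto)
qed

lemma Dm_approx:
  assumes "a < x" "x < b" "e > 0"
  shows "\<exists>w<x. a < w \<and> (\<forall>w'. w \<le> w' \<and> w' < x \<longrightarrow> sl f w' x \<le> Dm f a x + e)"
proof -
  have ne: "{a<..<x} \<noteq> {}" using assms by auto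
  obtain w where w: "w \<in> {a<..<x}" "sl f w x < Dm f a x + e"
    using cINF_less_iff[OF ne bddB[OF assms(1,2)], of "Dm f a x + e"] assms(3)
    unfolding Dm_def by auto
  show ?thesis
  proof (intro exI conjI allI impI)
    fix w' assume "w \<le> w' \<and> w' < x"
    then have "sl f w' x \<le> sl f w x"
      using concave_chord_mono[OF conc, of w x x w'] w assms by auto
    then show "sl f w' x \<le> Dm f a x + e" using w by linarith
  qed (use w in auto)
qed

lemma diff_if_eq:
  assumes x: "a < x" "x < b" and eq: "Dp f b x = Dm f a x"
  shows "(f has_real_derivative Dp f b x) (at x)"
  unfolding DERIV_def
proof (subst filterlim_at_split, intro conjI)
  let ?D = "Dp f b x"
  show "((\<lambda>h. (f (x + h) - f x) / h) \<longlongrightarrow> ?D) (at_right 0)"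
  proof (rule tendstoI)
    fix e :: real assume e: "e > 0"
    obtain z where z: "z > x" "z < b" "\<And>z'. x < z' \<Longrightarrow> z' \<le> z \<Longrightarrow> sl f x z' \<ge> ?D - e/2"
      using Dp_approx[OF x, of "e/2"] e by auto
    show "\<forall>\<^sub>F h in at_right 0. dist ((f (x + h) - f x) / h) ?D < e"
      unfolding eventually_at_right_field
    proof (intro exI[of _ "z - x"] conjI allI impI)
      fix h :: real assume h: "0 < h" "h < z - x"
      have q: "(f (x + h) - f x) / h = sl f x (x + h)" unfolding sl_def
        by (simp add: divide_simps algebra_simps)
      have "sl f x (x+h) \<le> ?D" using Dp_ge[of x "x+h"] x z h by auto
      moreover have "sl f x (x+h) \<ge> ?D - e/2" using z(3)[of "x+h"] h by auto
      ultimately show "dist ((f (x + h) - f x) / h) ?D < e" using q e by (simp add: dist_real_def abs_if)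
    qed (use z in auto)
  qed
  show "((\<lambda>h. (f (x + h) - f x) / h) \<longlongrightarrow> ?D) (at_left 0)"
  proof (rule tendstoI)
    fix e :: real assume e: "e > 0"
    obtain w where w: "w < x" "a < w" "\<And>w'. w \<le> w' \<Longrightarrow> w' < x \<Longrightarrow> sl f w' x \<le> Dm f a x + e/2"
      using Dm_approx[OF x, of "e/2"] e by auto
    show "\<forall>\<^sub>F h in at_left 0. dist ((f (x + h) - f x) / h) ?D < e"
      unfolding eventually_at_left_field
    proof (intro exI[of _ "w - x"] conjI allI impI)
      fix h :: real assume h: "w - x < h" "h < 0"
      have q: "(f (x + h) - f x) / h = sl f (x + h) x" unfolding sl_def
        by (simp add: divide_simps algebra_simps)
      have "sl f (x+h) x \<ge> Dm f a x" using Dm_le[of "x+h" x] x w h by auto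
      moreover have "sl f (x+h) x \<le> Dm f a x + e/2" using w(3)[of "x+h"] h by auto
      ultimately show "dist ((f (x + h) - f x) / h) ?D < e" using q e eq by (simp add: dist_real_def abs_if)
    qed (use w in auto)
  qed
qed

lemma nondiff_countable:
  "countable {x \<in> {a<..<b}. \<not> f differentiable (at x)}"
proof -
  let ?S = "{x \<in> {a<..<b}. \<not> f differentiable (at x)}"
  have lt: "Dp f b x < Dm f a x" if "x \<in> ?S" for x
  proof -
    have "Dp f b x \<le> Dm f a x" using Dp_le_Dm that by auto
    moreover have "Dp f b x \<noteq> Dm f a x"
    proof
      assume "Dp f b x = Dm f a x"
      then have "(f has_real_derivative Dp f b x) (at x)" using diff_if_eq that by auto
      then show False using that real_differentiable_def by blast
    qed
    ultimately show ?thesis by simp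
  qed
  define r where "r x = (SOME q. q \<in> \<rat> \<and> Dp f b x < q \<and> q < Dm f a x)" for x
  have r: "r x \<in> \<rat> \<and> Dp f b x < r x \<and> r x < Dm f a x" if "x \<in> ?S" for x
    unfolding r_def by (rule someI_ex) (use Rats_dense_in_real lt[OF that] in blast)
  have "inj_on r ?S"
  proof (rule inj_onI)
    fix x y assume xS: "x \<in> ?S" and yS: "y \<in> ?S" and eq: "r x = r y"
    show "x = y"
    proof (rule ccontr)
      assume "x \<noteq> y"
      then consider "x < y" | "y < x" by linarith
      then show False
      proof cases
        case 1
        have "Dm f a y \<le> sl f x y" using Dm_le[of x y] xS yS 1 by auto
        also have "\<dots> \<le> Dp f b x" using Dp_ge[of x y] xS yS 1 by auto
        finally show False using r[OF xS] r[OF yS] eq by linarith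
      next
        case 2
        have "Dm f a x \<le> sl f y x" using Dm_le[of y x] xS yS 2 by auto
        also have "\<dots> \<le> Dp f b y" using Dp_ge[of y x] xS yS 2 by auto
        finally show False using r[OF xS] r[OF yS] eq by linarith
      qed
    qed
  qed
  moreover have "countable (r ` ?S)"
    by (rule countable_subset[OF _ countable_rat]) (use r in auto)
  ultimately show ?thesis using countable_image_inj_on by blast
qed

end


lemma concave_cont:
  fixes f :: "real \<Rightarrow> real"
  assumes "concave_on {a<..<b} f" shows "continuous_on {a<..<b} f"
proof -
  have "convex_on {a<..<b} (\<lambda>x. - f x)" using assms by (simp add: concave_on_def)
  then have "continuous_on {a<..<b} (\<lambda>x. - f x)"
    using convex_on_continuous[of "{a<..<b}" "\<lambda>x. - f x"] by auto
  from continuous_on_minus[OF this] show ?thesis by simp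
qed

context
  fixes k :: "real \<Rightarrow> real"
  assumes cn: "concave_on {-1<..<0} k" and cp: "concave_on {0<..<1} k"
    and pm: "AE t in lborel. t \<in> {0<..<1} \<longrightarrow> deriv k t - deriv k (t - 1) \<ge> 0"
begin

lemma good_point:
  assumes "0 \<le> \<alpha>" "\<alpha> < \<beta>" "\<beta> \<le> 1"
  shows "\<exists>t\<in>{\<alpha><..<\<beta>}. (k has_real_derivative deriv k t) (at t) \<and>
             (k has_real_derivative deriv k (t - 1)) (at (t - 1)) \<and> deriv k t \<ge> deriv k (t - 1)"
proof (rule ccontr)
  assume nex: "\<not> ?thesis"
  define C1 where "C1 = {x \<in> {0<..<1}. \<not> k differentiable (at x)}"
  define C2 where "C2 = (\<lambda>x. x + 1) ` {x \<in> {-1<..<0}. \<not> k differentiable (at x)}"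
  have c1: "countable C1" unfolding C1_def by (rule nondiff_countable[OF cp])
  have c2: "countable C2" unfolding C2_def by (rule countable_image, rule nondiff_countable[OF cn])
  from pm obtain N where N: "{t \<in> space lborel. \<not> (t \<in> {0<..<1} \<longrightarrow> deriv k t - deriv k (t - 1) \<ge> 0)} \<subseteq> N"
    "N \<in> null_sets lborel" using pm unfolding eventually_ae_filter by blast
  have sub: "{\<alpha><..<\<beta>} \<subseteq> N \<union> C1 \<union> C2"
  proof
    fix t assume t: "t \<in> {\<alpha><..<\<beta>}"
    show "t \<in> N \<union> C1 \<union> C2"
    proof (rule ccontr)
      assume nt: "t \<notin> N \<union> C1 \<union> C2"
      have t01: "t \<in> {0<..<1}" using t assms by auto
      have d1: "k differentiable (at t)" using nt t01 unfolding C1_def by auto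
      have d2: "k differentiable (at (t - 1))"
      proof (rule ccontr)
        assume "\<not> k differentiable (at (t - 1))"
        then have "t - 1 \<in> {x \<in> {-1<..<0}. \<not> k differentiable (at x)}" using t01 by auto
        then have "t \<in> C2" unfolding C2_def by (auto intro: image_eqI[of _ _ "t - 1"])
        then show False using nt by auto
      qed
      have "deriv k t - deriv k (t - 1) \<ge> 0" using nt N(1) t01 by auto
      then show False using nex t d1 d2 by (auto simp: DERIV_deriv_iff_real_differentiable)
    qed
  qed
  have "N \<union> C1 \<union> C2 \<in> null_sets lborel"
    using N(2) countable_imp_null_set_lborel[OF c1] countable_imp_null_set_lborel[OF c2] by auto
  then have "{\<alpha><..<\<beta>} \<in> null_sets lborel" using null_sets_subset[OF _ _ sub] by auto
  then have "emeasure lborel {\<alpha><..<\<beta>} = 0" by auto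
  then show False using assms by simp
qed

lemma Dp_compare:
  assumes t0: "0 < t0" "t0 < 1"
  shows "Dp k 0 (t0 - 1) \<le> Dp k 1 t0"
proof (rule field_le_epsilon)
  fix e :: real assume e: "e > 0"
  obtain z where z: "z > t0 - 1" "z < 0" "\<And>z'. t0 - 1 < z' \<Longrightarrow> z' \<le> z \<Longrightarrow> sl k (t0 - 1) z' \<ge> Dp k 0 (t0 - 1) - e/2"
    using Dp_approx[OF cn, of "t0 - 1" "e/2"] t0 e by auto
  have cont: "isCont (\<lambda>u. sl k u z) (t0 - 1)"
  proof -
    have "isCont k (t0 - 1)"
      using concave_cont[OF cn] t0 by (simp add: continuous_on_eq_continuous_at)
    then show ?thesis unfolding sl_def using z by (intro continuous_intros) auto
  qed
  then obtain \<rho> where \<rho>: "\<rho> > 0" "\<And>u. dist u (t0 - 1) < \<rho> \<Longrightarrow> dist (sl k u z) (sl k (t0 - 1) z) < e/2"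
    unfolding continuous_at_eps_delta using e by (metis half_gt_zero)
  define \<beta> where "\<beta> = min (t0 + \<rho>) (min (z + 1) 1)"
  have "t0 < \<beta>" "\<beta> \<le> 1" using \<rho> z t0 unfolding \<beta>_def by auto
  then obtain t where t: "t \<in> {t0<..<\<beta>}" and d1: "(k has_real_derivative deriv k t) (at t)"
    and d2: "(k has_real_derivative deriv k (t - 1)) (at (t - 1))" and dd: "deriv k t \<ge> deriv k (t - 1)"
    using good_point[of t0 \<beta>] t0 by auto
  have tb: "t < t0 + \<rho>" "t < z + 1" "t < 1" using t unfolding \<beta>_def by auto
  have "sl k t0 t \<le> Dp k 1 t0" using Dp_ge[OF cp, of t0 t] t t0 tb by auto
  moreover have "sl k t0 t \<ge> deriv k t" using concave_tangent(1)[OF cp _ _ d1, of t0] t t0 tb by auto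
  moreover have "sl k (t - 1) z \<le> deriv k (t - 1)"
    using concave_tangent(2)[OF cn _ _ d2, of z] t t0 tb z by auto
  moreover have "dist (sl k (t - 1) z) (sl k (t0 - 1) z) < e/2" using \<rho>(2)[of "t - 1"] t tb by (auto simp: dist_real_def)
  then have "\<bar>sl k (t - 1) z - sl k (t0 - 1) z\<bar> < e/2" by (simp add: dist_real_def)
  then have "sl k (t - 1) z > sl k (t0 - 1) z - e/2" using abs_ge_minus_self[of "sl k (t - 1) z - sl k (t0 - 1) z"] by linarith
  moreover have "sl k (t0 - 1) z \<ge> Dp k 0 (t0 - 1) - e/2" using z by auto
  ultimately show "Dp k 0 (t0 - 1) \<le> Dp k 1 t0 + e" using dd by linarith
qed

lemma g_mono:
  assumes st: "0 < s" "s \<le> t" "t < 1"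
  shows "k s - k (s - 1) \<le> k t - k (t - 1)"
proof (rule ccontr)
  assume "\<not> ?thesis"
  then have gt: "k s - k (s - 1) > k t - k (t - 1)" by simp
  then have "s < t" using st by (cases "s = t") auto
  define g where "g x = k x - k (x - 1)" for x
  define lam where "lam = (g s - g t) / (2 * (t - s))"
  have lam: "lam > 0" using gt \<open>s < t\<close> unfolding lam_def g_def by auto
  define \<phi> where "\<phi> x = g x + lam * x" for x
  have "lam * (t - s) = (g s - g t) / 2" unfolding lam_def using \<open>s < t\<close> by (simp add: field_simps)
  then have "\<phi> t < \<phi> s" using gt unfolding \<phi>_def g_def by (simp add: algebra_simps)
  have "{s..t} \<subseteq> {0<..<1}" using st by auto
  then have contk1: "continuous_on {s..t} k" using continuous_on_subset[OF concave_cont[OF cp]] by auto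
  have contk2: "continuous_on {s..t} (\<lambda>x. k (x - 1))"
  proof -
    have "(\<lambda>x. x - 1) ` {s..t} \<subseteq> {-1<..<0}" using st by auto
    then have "continuous_on ((\<lambda>x. x - 1) ` {s..t}) k" by (rule continuous_on_subset[OF concave_cont[OF cn]])
    moreover have "continuous_on {s..t} (\<lambda>x. x - 1)" by (intro continuous_intros)
    ultimately show ?thesis using continuous_on_compose[of "{s..t}" "\<lambda>x. x - 1" k] by (simp add: o_def)
  qed
  have cphi: "continuous_on {s..t} \<phi>" unfolding \<phi>_def g_def using contk1 contk2 by (intro continuous_intros) auto
  define A where "A = {x \<in> {s..t}. \<phi> s \<le> \<phi> x}"
  have clA: "closed A" unfolding A_def by (rule continuous_on_closed_Collect_le) (use cphi in auto)
  have sA: "s \<in> A" unfolding A_def using \<open>s < t\<close> by auto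
  have bA: "bdd_above A" unfolding A_def by (auto intro: bdd_aboveI[of _ t])
  define xs where "xs = Sup A"
  have xsA: "xs \<in> A" unfolding xs_def using closed_contains_Sup[OF _ bA clA] sA by auto
  then have xs: "s \<le> xs" "xs \<le> t" "\<phi> s \<le> \<phi> xs" unfolding A_def by auto
  have "xs \<noteq> t" using xs \<open>\<phi> t < \<phi> s\<close> by auto
  then have xst: "xs < t" using xs by simp
  have notA: "\<phi> x < \<phi> xs" if "xs < x" "x \<le> t" for x
  proof -
    have "x \<notin> A"
    proof
      assume "x \<in> A" then have "x \<le> xs" unfolding xs_def using bA by (rule cSup_upper)
      then show False using that by simp
    qed
    then show ?thesis using that xs unfolding A_def by auto
  qed
  obtain z where z: "z > xs" "z < 1" "\<And>z'. xs < z' \<Longrightarrow> z' \<le> z \<Longrightarrow> sl k xs z' \<ge> Dp k 1 xs - lam/2"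
    using Dp_approx[OF cp, of xs "lam/2"] xs st lam by auto
  define x where "x = min z t"
  have x: "xs < x" "x \<le> t" "x \<le> z" using z xst unfolding x_def by auto
  have s1: "sl k xs x \<ge> Dp k 1 xs - lam/2" using z(3) x by auto
  have s2: "sl k (xs - 1) (x - 1) \<le> Dp k 0 (xs - 1)" using Dp_ge[OF cn, of "xs - 1" "x - 1"] x xs st by auto
  have s3: "Dp k 0 (xs - 1) \<le> Dp k 1 xs" using Dp_compare xs st by auto
  have eq: "g x - g xs = (x - xs) * (sl k xs x - sl k (xs - 1) (x - 1))"
    unfolding g_def sl_def using x by (simp add: divide_simps) (simp add: algebra_simps)
  have "sl k xs x - sl k (xs - 1) (x - 1) \<ge> - lam/2" using s1 s2 s3 by linarith
  then have "(x - xs) * (- lam/2) \<le> (x - xs) * (sl k xs x - sl k (xs - 1) (x - 1))"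
    using x by (intro mult_left_mono) auto
  then have "g x - g xs \<ge> (x - xs) * (- lam/2)" using eq by simp
  moreover have "\<phi> x - \<phi> xs = (g x - g xs) + lam * (x - xs)" unfolding \<phi>_def by (simp add: algebra_simps)
  moreover have "(x - xs) * (- lam/2) = - (lam * (x - xs)) / 2" "(x - xs) * (lam/2) = lam * (x - xs) / 2" by (simp_all add: field_simps)
  ultimately have "\<phi> x - \<phi> xs \<ge> (x - xs) * (lam/2)" by linarith
  moreover have "(x - xs) * (lam/2) > 0" using x lam by simp
  ultimately show False using notA[OF x(1,2)] by linarith
qed

end


lemma shift_mono:
  assumes c: "concave_on {a<..<b} f" and pq: "p \<le> q" and h: "h \<noteq> 0"
    and I: "p \<in> {a<..<b}" "p + h \<in> {a<..<b}" "q \<in> {a<..<b}" "q + h \<in> {a<..<b}"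
  shows "sl f p (p + h) \<ge> sl f q (q + h)"
proof (cases "h > 0")
  case True
  then show ?thesis using concave_chord_mono[OF c, of p "q + h" "p + h" q] I pq by auto
next
  case False
  then have "h < 0" using h by simp
  then have "sl f (p + h) p \<ge> sl f (q + h) q"
    using concave_chord_mono[OF c, of "p + h" q p "q + h"] I pq by auto
  then show ?thesis by (simp add: sl_sym)
qed

lemma strict_three:
  assumes sc: "strictly_concave_on I f" and I: "x \<in> I" "y \<in> I" and t: "x < t" "t < y"
  shows "sl f x t > sl f t y"
proof -
  define u where "u = (y - t) / (y - x)"
  have u: "0 < u" "u < 1" using t unfolding u_def by (auto simp: field_simps)
  have u1: "u * (y - x) = y - t" using t unfolding u_def by simp
  have "u * x + (1 - u) * y = y - u * (y - x)" by (simp add: algebra_simps)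
  then have ut: "u * x + (1 - u) * y = t" using u1 by simp
  have "u * f x + (1 - u) * f y < f (u * x + (1 - u) * y)"
    using sc I u t unfolding strictly_concave_on_def by auto
  then have *: "u * f x + (1 - u) * f y < f t" using ut by simp
  have u2: "(1 - u) * (y - x) = t - x" using u1 by (simp add: algebra_simps)
  have "(y - x) * (u * f x + (1 - u) * f y) < (y - x) * f t"
    using * t by (intro mult_strict_left_mono) auto
  moreover have "(y - x) * (u * f x + (1 - u) * f y) = (u * (y - x)) * f x + ((1 - u) * (y - x)) * f y"
    by (simp add: algebra_simps)
  ultimately have "(y - t) * f x + (t - x) * f y < (y - x) * f t" using u1 u2 by simp
  then have "(f t - f x) * (y - t) > (f y - f t) * (t - x)" by (simp add: algebra_simps)
  then show ?thesis using t unfolding sl_def by (simp add: divide_simps) (simp add: algebra_simps)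
qed

lemma uniform_gap:
  fixes f :: "real \<Rightarrow> real"
  assumes c: "concave_on {a<..<b} f" and sc: "strictly_concave_on {a<..<b} f"
    and ab: "a < \<alpha>" "\<beta> < b" and nu: "\<nu> > 0"
  shows "\<exists>\<epsilon>>0. \<forall>r p h. \<alpha> \<le> r \<longrightarrow> \<alpha> \<le> r + h \<longrightarrow> r + \<nu> \<le> p \<longrightarrow> p \<le> \<beta> \<longrightarrow> p + h \<le> \<beta> \<longrightarrow>
           h \<noteq> 0 \<longrightarrow> \<bar>h\<bar> \<le> \<nu>/3 \<longrightarrow> sl f r (r + h) \<ge> sl f p (p + h) + \<epsilon>"
proof (cases "\<alpha> \<le> \<beta> - \<nu>")
  case False
  show ?thesis by (rule exI[of _ 1]) (use False in auto)
next
  case True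
  define \<phi> where "\<phi> r = sl f (r + \<nu>/3) (r + 2*\<nu>/3) - sl f (r + 2*\<nu>/3) (r + \<nu>)" for r
  have cf: "continuous_on {a<..<b} f" by (rule concave_cont[OF c])
  have cphi: "continuous_on {\<alpha>..\<beta> - \<nu>} \<phi>"
  proof -
    have sub: "(\<lambda>r. r + d) ` {\<alpha>..\<beta> - \<nu>} \<subseteq> {a<..<b}" if "0 \<le> d" "d \<le> \<nu>" for d
      using that ab by auto
    have cc: "continuous_on {\<alpha>..\<beta> - \<nu>} (\<lambda>r. f (r + d))" if "0 \<le> d" "d \<le> \<nu>" for d
    proof -
      have "continuous_on ((\<lambda>r. r + d) ` {\<alpha>..\<beta> - \<nu>}) f" by (rule continuous_on_subset[OF cf sub[OF that]])
      moreover have "continuous_on {\<alpha>..\<beta> - \<nu>} (\<lambda>r. r + d)" by (intro continuous_intros)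
      ultimately show ?thesis using continuous_on_compose[of "{\<alpha>..\<beta> - \<nu>}" "\<lambda>r. r + d" f] by (simp add: o_def)
    qed
    have e: "\<phi> = (\<lambda>r. (f (r + \<nu>/3) - f (r + 2*\<nu>/3)) / (- \<nu>/3) - (f (r + 2*\<nu>/3) - f (r + \<nu>)) / (- \<nu>/3))"
      unfolding \<phi>_def sl_def by (rule ext) (simp add: field_simps)
    show ?thesis unfolding e using nu
      by (intro continuous_intros cc) auto
  qed
  obtain r0 where r0: "r0 \<in> {\<alpha>..\<beta> - \<nu>}" "\<And>r. r \<in> {\<alpha>..\<beta> - \<nu>} \<Longrightarrow> \<phi> r0 \<le> \<phi> r"
    using continuous_attains_inf[OF compact_Icc _ cphi] True by auto
  have pos: "\<phi> r0 > 0"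
    using strict_three[OF sc, of "r0 + \<nu>/3" "r0 + \<nu>" "r0 + 2*\<nu>/3"] r0 ab nu unfolding \<phi>_def by auto
  show ?thesis
  proof (intro exI[of _ "\<phi> r0"] conjI allI impI pos)
    fix r p h assume h: "\<alpha> \<le> r" "\<alpha> \<le> r + h" "r + \<nu> \<le> p" "p \<le> \<beta>" "p + h \<le> \<beta>" "h \<noteq> 0" "\<bar>h\<bar> \<le> \<nu>/3"
    have rI: "r \<in> {\<alpha>..\<beta> - \<nu>}" using h by auto
    have A: "sl f r (r + h) \<ge> sl f (r + \<nu>/3) (r + 2*\<nu>/3)"
    proof (cases "h > 0")
      case True then show ?thesis
        using concave_chord_mono[OF c, of r "r + 2*\<nu>/3" "r + h" "r + \<nu>/3"] h ab nu by auto
    next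
      case False
      then have "h < 0" using h by auto
      then have "sl f (r + h) r \<ge> sl f (r + \<nu>/3) (r + 2*\<nu>/3)"
        using concave_chord_mono[OF c, of "r + h" "r + 2*\<nu>/3" r "r + \<nu>/3"] h ab nu by auto
      then show ?thesis by (simp add: sl_sym)
    qed
    have B: "sl f p (p + h) \<le> sl f (r + 2*\<nu>/3) (r + \<nu>)"
    proof (cases "h > 0")
      case True then show ?thesis
        using concave_chord_mono[OF c, of "r + 2*\<nu>/3" "p + h" "r + \<nu>" p] h ab nu by auto
    next
      case False
      then have "h < 0" using h by auto
      then have "sl f (p + h) p \<le> sl f (r + 2*\<nu>/3) (r + \<nu>)"
        using concave_chord_mono[OF c, of "r + 2*\<nu>/3" p "r + \<nu>" "p + h"] h ab nu by auto
      then show ?thesis by (simp add: sl_sym)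
    qed
    have "\<phi> r0 \<le> \<phi> r" using r0(2)[OF rI] .
    then show "sl f r (r + h) \<ge> sl f p (p + h) + \<phi> r0" using A B unfolding \<phi>_def by linarith
  qed
qed

lemma slope_bound:
  fixes f :: "real \<Rightarrow> real"
  assumes c: "concave_on {a<..<b} f" and ab: "a < \<alpha>" "\<beta> < b"
  shows "\<exists>M. \<forall>u v. \<alpha> \<le> u \<longrightarrow> u \<le> \<beta> \<longrightarrow> \<alpha> \<le> v \<longrightarrow> v \<le> \<beta> \<longrightarrow> \<bar>sl f u v\<bar> \<le> M"
proof -
  define \<alpha>' where "\<alpha>' = (a + \<alpha>) / 2"
  define \<beta>' where "\<beta>' = (\<beta> + b) / 2"
  have lt: "a < \<alpha>'" "\<alpha>' < \<alpha>" "\<beta> < \<beta>'" "\<beta>' < b" using ab unfolding \<alpha>'_def \<beta>'_def by auto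
  have main: "sl f \<beta> \<beta>' \<le> sl f u v \<and> sl f u v \<le> sl f \<alpha>' \<alpha>" if "\<alpha> \<le> u" "u < v" "v \<le> \<beta>" for u v
    using concave_chord_mono[OF c, of \<alpha>' v \<alpha> u] concave_chord_mono[OF c, of u \<beta>' v \<beta>] that lt by auto
  show ?thesis
  proof (intro exI[of _ "\<bar>sl f \<beta> \<beta>'\<bar> + \<bar>sl f \<alpha>' \<alpha>\<bar>"] allI impI)
    fix u v assume uv: "\<alpha> \<le> u" "u \<le> \<beta>" "\<alpha> \<le> v" "v \<le> \<beta>"
    consider "u < v" | "u = v" | "v < u" by linarith
    then show "\<bar>sl f u v\<bar> \<le> \<bar>sl f \<beta> \<beta>'\<bar> + \<bar>sl f \<alpha>' \<alpha>\<bar>"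
    proof cases
      case 1 then show ?thesis using main[of u v] uv by auto
    next
      case 2 then show ?thesis by (simp add: sl_def)
    next
      case 3 then show ?thesis using main[of v u] uv by (auto simp: sl_sym)
    qed
  qed
qed

lemma column_gap:
  fixes k :: "real \<Rightarrow> real"
  assumes cn: "concave_on {-1<..<0} k" and cp: "concave_on {0<..<1} k"
    and scn: "strictly_concave_on {-1<..<0} k"
    and pm: "AE t in lborel. t \<in> {0<..<1} \<longrightarrow> deriv k t - deriv k (t - 1) \<ge> 0"
    and mu: "0 < \<mu>" "\<mu> < 1"
  shows "\<exists>\<epsilon>>0. \<forall>p q h. h \<noteq> 0 \<longrightarrow> \<bar>h\<bar> \<le> \<mu>/4 \<longrightarrow> p \<le> -\<mu>/2 \<longrightarrow> p + h \<le> -\<mu>/2 \<longrightarrow>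
      \<mu>/2 \<le> q \<longrightarrow> \<mu>/2 \<le> q + h \<longrightarrow> q < 1 \<longrightarrow> q + h < 1 \<longrightarrow> q - p \<le> 1 - \<mu> \<longrightarrow>
      sl k q (q + h) \<ge> sl k p (p + h) + \<epsilon>"
proof -
  obtain \<epsilon> where \<epsilon>: "\<epsilon> > 0" and ug: "\<And>r p h. -1 + \<mu>/4 \<le> r \<Longrightarrow> -1 + \<mu>/4 \<le> r + h \<Longrightarrow> r + \<mu> \<le> p \<Longrightarrow>
      p \<le> -\<mu>/4 \<Longrightarrow> p + h \<le> -\<mu>/4 \<Longrightarrow> h \<noteq> 0 \<Longrightarrow> \<bar>h\<bar> \<le> \<mu>/3 \<Longrightarrow> sl k r (r + h) \<ge> sl k p (p + h) + \<epsilon>"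
    using uniform_gap[OF cn scn, of "-1 + \<mu>/4" "-\<mu>/4" \<mu>] mu by auto
  show ?thesis
  proof (intro exI[of _ \<epsilon>] conjI \<epsilon> allI impI)
    fix p q h assume a: "h \<noteq> 0" "\<bar>h\<bar> \<le> \<mu>/4" "p \<le> -\<mu>/2" "p + h \<le> -\<mu>/2" "\<mu>/2 \<le> q" "\<mu>/2 \<le> q + h"
      "q < 1" "q + h < 1" "q - p \<le> 1 - \<mu>"
    have 1: "sl k (q - 1) (q - 1 + h) \<ge> sl k p (p + h) + \<epsilon>"
      by (rule ug) (use a mu in auto)
    have 2: "sl k (q - 1) (q - 1 + h) \<le> sl k q (q + h)"
    proof (cases "h > 0")
      case True
      have "k q - k (q - 1) \<le> k (q + h) - k (q + h - 1)"
        by (rule g_mono[OF cn cp pm]) (use a mu True in auto)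
      then have "k (q - 1 + h) - k (q - 1) \<le> k (q + h) - k q" by (simp add: algebra_simps)
      then have "(k (q - 1 + h) - k (q - 1)) / h \<le> (k (q + h) - k q) / h"
        using True by (simp add: divide_right_mono)
      moreover have "sl k (q - 1) (q - 1 + h) = (k (q - 1 + h) - k (q - 1)) / h"
        unfolding sl_def using True by (simp add: divide_simps algebra_simps)
      moreover have "sl k q (q + h) = (k (q + h) - k q) / h"
        unfolding sl_def using True by (simp add: divide_simps algebra_simps)
      ultimately show ?thesis by simp
    next
      case False
      then have hn: "h < 0" using a by simp
      have "k (q + h) - k (q + h - 1) \<le> k q - k (q - 1)"
        by (rule g_mono[OF cn cp pm]) (use a mu hn in auto)
      then have "k (q - 1) - k (q - 1 + h) \<le> k q - k (q + h)" by (simp add: algebra_simps)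
      then have "(k (q - 1) - k (q - 1 + h)) / (- h) \<le> (k q - k (q + h)) / (- h)"
        using hn by (intro divide_right_mono) auto
      moreover have "sl k (q - 1) (q - 1 + h) = (k (q - 1) - k (q - 1 + h)) / (- h)"
        unfolding sl_def using hn by (simp add: divide_simps algebra_simps)
      moreover have "sl k q (q + h) = (k q - k (q + h)) / (- h)"
        unfolding sl_def using hn by (simp add: divide_simps algebra_simps)
      ultimately show ?thesis by simp
    qed
    show "sl k q (q + h) \<ge> sl k p (p + h) + \<epsilon>" using 1 2 by linarith
  qed
qed


context
  fixes dummy :: "'n::{finite,linorder}"
begin

abbreviation "LL \<equiv> sorted_list_of_set (UNIV :: 'n set)"

lemma LL_props: "set LL = UNIV" "distinct LL" "sorted_wrt (<) LL" "length LL = CARD('n)"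
  by (simp_all add: strict_sorted_list_of_set)

lemma card_below_LL:
  assumes m: "m < CARD('n)"
  shows "idx_pos (LL ! m) = m"
proof -
  have "{j. j < LL ! m} = (\<lambda>i. LL ! i) ` {..<m}"
  proof (intro set_eqI iffI)
    fix j assume "j \<in> {j. j < LL ! m}"
    then have jl: "j < LL ! m" by simp
    obtain i where i: "i < length LL" "LL ! i = j" using LL_props(1) by (metis UNIV_I in_set_conv_nth)
    have "i < m"
    proof (rule ccontr)
      assume "\<not> i < m"
      then have "m \<le> i" by simp
      then have "LL ! m \<le> LL ! i"
        using LL_props(3) i m by (metis le_less sorted_wrt_nth_less)
      then show False using jl i by simp
    qed
    then show "j \<in> (\<lambda>i. LL ! i) ` {..<m}" using i by auto
  next
    fix j assume "j \<in> (\<lambda>i. LL ! i) ` {..<m}"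
    then obtain i where "i < m" "j = LL ! i" by auto
    then show "j \<in> {j. j < LL ! m}" using sorted_wrt_nth_less[OF LL_props(3)] m LL_props(4) by auto
  qed
  moreover have "inj_on (\<lambda>i. LL ! i) {..<m}"
    using inj_on_nth[OF LL_props(2)] m LL_props(4) by auto
  ultimately show ?thesis unfolding idx_pos_def by (simp add: card_image)
qed

lemma idx_pos_lt: "idx_pos (i::'n) < CARD('n)"
proof -
  have "{j. j < i} \<subset> UNIV" by auto
  then show ?thesis unfolding idx_pos_def by (simp add: psubset_card_mono)
qed

lemma idx_of_pos: "idx_of (idx_pos (i::'n) + 1) = i"
proof -
  obtain m where m: "m < length LL" "LL ! m = i" using LL_props(1) by (metis UNIV_I in_set_conv_nth)
  then have "idx_pos i = m" using card_below_LL LL_props(4) by auto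
  then show ?thesis using m unfolding idx_of_def by simp
qed

lemma idx_pos_of: "1 \<le> k \<Longrightarrow> k \<le> CARD('n) \<Longrightarrow> idx_pos (idx_of k :: 'n) = k - 1"
  unfolding idx_of_def using card_below_LL[of "k - 1"] by auto

lemma idx_pos_mono: "(i::'n) < j \<Longrightarrow> idx_pos i < idx_pos j"
proof -
  assume ij: "i < j"
  have "{x. x < i} \<subset> {x. x < j}" using ij by auto
  then show ?thesis unfolding idx_pos_def by (simp add: psubset_card_mono)
qed

lemma idx_pos_mono_iff: "idx_pos (i::'n) < idx_pos j \<longleftrightarrow> i < j"
  using idx_pos_mono by (metis less_asym neq_iff)

lemma idx_pos_inj: "inj (idx_pos :: 'n \<Rightarrow> nat)"
  by (metis idx_of_pos injI)

lemma idx_pos_bij: "bij_betw (idx_pos :: 'n \<Rightarrow> nat) UNIV {..<CARD('n)}"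
proof -
  have "idx_pos ` (UNIV::'n set) \<subseteq> {..<CARD('n)}" using idx_pos_lt by auto
  moreover have "{..<CARD('n)} \<subseteq> idx_pos ` (UNIV::'n set)"
  proof
    fix m assume "m \<in> {..<CARD('n)}"
    then have "idx_pos (idx_of (m + 1) :: 'n) = m" using idx_pos_of[of "m+1"] by auto
    then show "m \<in> idx_pos ` (UNIV::'n set)" by (metis rangeI)
  qed
  ultimately show ?thesis using idx_pos_inj unfolding bij_betw_def by auto
qed

lemma sum_idx_pos: "(\<Sum>i\<in>(UNIV::'n set). f (idx_pos i)) = (\<Sum>m<CARD('n). f m)"
  using sum.reindex_bij_betw[OF idx_pos_bij, of f] by simp

lemma idx_of_mono: "1 \<le> k \<Longrightarrow> k < l \<Longrightarrow> l \<le> CARD('n) \<Longrightarrow> (idx_of k :: 'n) < idx_of l"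
  using idx_pos_of[of k] idx_pos_of[of l] idx_pos_mono_iff[of "idx_of k :: 'n" "idx_of l"] by auto

end

lemma ypt_pos: "ypt y (idx_pos (i::'n::{finite,linorder}) + 1) = y $ i"
  unfolding ypt_def using idx_pos_lt[of i] idx_of_pos[of i] by auto

lemma ypt_mono:
  fixes y :: "real^'n::{finite,linorder}"
  assumes y: "y \<in> simplexS" and kl: "k < l" "l \<le> CARD('n) + 1"
  shows "ypt y k < ypt y l"
proof -
  have y01: "0 < y $ i" "y $ i < 1" for i using y unfolding simplexS_def by auto
  have ymono: "i < j \<Longrightarrow> y $ i < y $ j" for i j using y unfolding simplexS_def by auto
  show ?thesis
  proof (cases "k = 0")
    case True
    then show ?thesis using kl y01 unfolding ypt_def by auto
  next
    case False
    show ?thesis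
    proof (cases "l = CARD('n) + 1")
      case True then show ?thesis using kl y01 False unfolding ypt_def by auto
    next
      case False2: False
      have "(idx_of k :: 'n) < idx_of l" using idx_of_mono[where 'n='n, of k l] False False2 kl by auto
      then show ?thesis using ymono False False2 kl unfolding ypt_def by auto
    qed
  qed
qed

lemma ypt_mono_le:
  fixes y :: "real^'n::{finite,linorder}"
  assumes y: "y \<in> simplexS" and kl: "k \<le> l" "l \<le> CARD('n) + 1"
  shows "ypt y k \<le> ypt y l"
  using ypt_mono[OF y, of k l] kl by (cases "k = l") auto

lemma ypt_range:
  fixes y :: "real^'n::{finite,linorder}"
  assumes y: "y \<in> simplexS"
  shows "0 \<le> ypt y k" "ypt y k \<le> 1"
  using y unfolding ypt_def simplexS_def by (auto simp: less_imp_le)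

lemma kernel_side:
  fixes y :: "real^'n::{finite,linorder}"
  assumes y: "y \<in> simplexS" and j: "j \<le> CARD('n)" and t: "ypt y j \<le> t" "t \<le> ypt y (Suc j)"
  shows "idx_pos i < j \<Longrightarrow> y $ i \<le> t" "j \<le> idx_pos i \<Longrightarrow> t \<le> y $ i"
proof -
  show "idx_pos i < j \<Longrightarrow> y $ i \<le> t"
    using ypt_mono_le[OF y, of "idx_pos i + 1" j] ypt_pos[of y i] t j by auto
  show "j \<le> idx_pos i \<Longrightarrow> t \<le> y $ i"
    using ypt_mono_le[OF y, of "Suc j" "idx_pos i + 1"] ypt_pos[of y i] t j idx_pos_lt[of i] by auto
qed


lemma ereal_sum_minf:
  fixes f :: "'a \<Rightarrow> ereal"
  assumes "finite A" "i0 \<in> A" "f i0 = -\<infinity>" "\<And>i. i \<in> A \<Longrightarrow> f i \<noteq> \<infinity>"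
  shows "sum f A = -\<infinity>"
proof -
  have "sum f A = f i0 + sum f (A - {i0})" using assms by (simp add: sum.remove)
  moreover have "sum f (A - {i0}) \<noteq> \<infinity>" using assms by (simp add: sum_Pinfty)
  ultimately show ?thesis using assms by simp
qed

locale LS =
  fixes K :: "'n::{finite,linorder} \<Rightarrow> real \<Rightarrow> ereal" and J :: "real \<Rightarrow> ereal"
  assumes kern: "\<And>i. kernel_function (K i)"
    and sing: "\<And>i. singular_kernel (K i)"
    and strict: "\<And>i. strictly_concave_kernel (K i)"
    and pm0: "\<And>i. PM0 (K i)"
    and nfield: "n_field_function CARD('n) J"
    and bdry: "(J 0 = -\<infinity> \<and> (J \<longlongrightarrow> -\<infinity>) (at_right 0)) \<or>
               (J 1 = -\<infinity> \<and> (J \<longlongrightarrow> -\<infinity>) (at_left 1))"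
begin

abbreviation kr :: "'n \<Rightarrow> real \<Rightarrow> real" where "kr i \<equiv> (\<lambda>s. real_of_ereal (K i s))"
abbreviation Jr :: "real \<Rightarrow> real" where "Jr \<equiv> (\<lambda>t. real_of_ereal (J t))"
abbreviation mr :: "nat \<Rightarrow> real^('n::{finite,linorder}) \<Rightarrow> real" where "mr j y \<equiv> real_of_ereal (mfun J K j y)"
abbreviation F :: "real^('n::{finite,linorder}) \<Rightarrow> real \<Rightarrow> ereal" where "F \<equiv> Ffun J K"

lemma K_fin: "s \<in> {-1<..<0} \<union> {0<..<1} \<Longrightarrow> K i s = ereal (kr i s)"
  using kern[of i] unfolding kernel_function_def by (metis real_of_ereal.simps(1) ereal_real')

lemma K0: "K i 0 = -\<infinity>" using sing[of i] unfolding singular_kernel_def by simp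

lemma K_notinf: "\<bar>s\<bar> < 1 \<Longrightarrow> K i s \<noteq> \<infinity>"
proof -
  assume "\<bar>s\<bar> < 1"
  then consider "s = 0" | "s \<in> {-1<..<0} \<union> {0<..<1}" by (cases "s = 0") (auto simp: abs_if split: if_splits)
  then show ?thesis
  proof cases
    case 1 then show ?thesis using K0 by simp
  next
    case 2
    then have "\<exists>r. K i s = ereal r" using K_fin[of s i] by blast
    then show ?thesis by auto
  qed
qed

lemma kr_cn: "concave_on {-1<..<0} (kr i)" and kr_cp: "concave_on {0<..<1} (kr i)"
  using kern[of i] unfolding kernel_function_def by auto

lemma kr_scn: "strictly_concave_on {-1<..<0} (kr i)"
  using strict[of i] unfolding strictly_concave_kernel_def by auto

lemma kr_pm: "AE t in lborel. t \<in> {0<..<1} \<longrightarrow> deriv (kr i) t - deriv (kr i) (t - 1) \<ge> 0"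
  using pm0[of i] unfolding PM0_def by auto

lemma K_lim_right: "(K i \<longlongrightarrow> -\<infinity>) (at_right 0)" and K_lim_left: "(K i \<longlongrightarrow> -\<infinity>) (at_left 0)"
  using kern[of i] K0[of i] unfolding kernel_function_def by auto

lemma J_notinf: "t \<in> {0..1} \<Longrightarrow> J t \<noteq> \<infinity>"
  using nfield unfolding n_field_function_def by auto

lemma J_bound: "\<exists>M. \<forall>t\<in>{0..1}. J t \<le> ereal M"
  using nfield unfolding n_field_function_def by auto

lemma simplexS_D:
  assumes "y \<in> simplexS"
  shows "0 < y $ i" "y $ i < 1" "i < j \<Longrightarrow> y $ i < y $ j"
  using assms unfolding simplexS_def by auto

lemma F_eq:
  assumes y: "y \<in> simplexS" and t: "t \<in> {0..1}" and Jt: "J t \<noteq> -\<infinity>" and ne: "\<And>i. t \<noteq> y $ i"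
  shows "F y t = ereal (Jr t + (\<Sum>i\<in>UNIV. kr i (t - y $ i)))"
proof -
  have "K i (t - y $ i) = ereal (kr i (t - y $ i))" for i
  proof (rule K_fin)
    show "t - y $ i \<in> {-1<..<0} \<union> {0<..<1}" using simplexS_D[OF y, of i] t ne[of i] by auto
  qed
  then have s: "(\<Sum>i\<in>UNIV. K i (t - y $ i)) = ereal (\<Sum>i\<in>UNIV. kr i (t - y $ i))"
    by (simp add: sum_ereal[symmetric] del: sum_ereal)
  obtain r where r: "J t = ereal r" using Jt J_notinf[OF t] by (cases "J t") auto
  then show ?thesis unfolding Ffun_def s by simp
qed

lemma F_minf:
  assumes y: "y \<in> simplexS" and t: "t \<in> {0..1}" and c: "J t = -\<infinity> \<or> (\<exists>i. t = y $ i)"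
  shows "F y t = -\<infinity>"
proof -
  have ni: "K i (t - y $ i) \<noteq> \<infinity>" for i
    by (rule K_notinf) (use simplexS_D[OF y, of i] t in auto)
  have sni: "(\<Sum>i\<in>UNIV. K i (t - y $ i)) \<noteq> \<infinity>" using ni by (simp add: sum_Pinfty)
  show ?thesis
  proof (cases "J t = -\<infinity>")
    case True then show ?thesis unfolding Ffun_def using sni by simp
  next
    case False
    then obtain i where i: "t = y $ i" using c by auto
    have "(\<Sum>i\<in>UNIV. K i (t - y $ i)) = -\<infinity>"
      by (rule ereal_sum_minf[of _ i]) (use i K0 ni in auto)
    then show ?thesis unfolding Ffun_def using J_notinf[OF t] by simp
  qed
qed

lemma F_notinf:
  assumes y: "y \<in> simplexS" and t: "t \<in> {0..1}"
  shows "F y t \<noteq> \<infinity>"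
proof (cases "J t = -\<infinity> \<or> (\<exists>i. t = y $ i)")
  case True then show ?thesis using F_minf[OF y t] by simp
next
  case False then show ?thesis using F_eq[OF y t] by auto
qed

end


lemma concave_bdd_above:
  fixes f :: "real \<Rightarrow> real"
  assumes c: "concave_on {a<..<b} f" and ab: "a < b"
  shows "\<exists>M. \<forall>s\<in>{a<..<b}. f s \<le> M"
proof -
  define c1 where "c1 = a + (b - a)/4"
  define c2 where "c2 = a + (b - a)/2"
  define c3 where "c3 = a + 3*(b - a)/4"
  have cs: "a < c1" "c1 < c2" "c2 < c3" "c3 < b" using ab unfolding c1_def c2_def c3_def by (simp_all add: field_simps)
  show ?thesis
  proof (intro exI ballI)
    fix s assume s: "s \<in> {a<..<b}"
    consider "s = c2" | "c2 < s" | "s < c2" by linarith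
    then show "f s \<le> \<bar>f c2\<bar> + (b - a) * \<bar>sl f c1 c2\<bar> + (b - a) * \<bar>sl f c2 c3\<bar>"
    proof cases
      case 1 then show ?thesis using ab by (smt (verit) abs_ge_self mult_nonneg_nonneg abs_ge_zero)
    next
      case 2
      have "sl f c2 s \<le> sl f c1 c2" using concave_chord_mono[OF c, of c1 s c2 c2] cs s 2 by auto
      moreover have "f s - f c2 = (s - c2) * sl f c2 s" unfolding sl_def using 2 by (simp add: divide_simps algebra_simps)
      ultimately have "f s - f c2 \<le> (s - c2) * sl f c1 c2" using 2 by (simp add: mult_left_mono)
      also have "\<dots> \<le> (s - c2) * \<bar>sl f c1 c2\<bar>" using 2 by (intro mult_left_mono) auto
      also have "\<dots> \<le> (b - a) * \<bar>sl f c1 c2\<bar>" using 2 s cs by (intro mult_right_mono) auto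
      finally show ?thesis using ab by (smt (verit) abs_ge_self mult_nonneg_nonneg abs_ge_zero)
    next
      case 3
      have "sl f s c2 \<ge> sl f c2 c3" using concave_chord_mono[OF c, of s c3 c2 c2] cs s 3 by auto
      moreover have "f c2 - f s = (c2 - s) * sl f s c2" unfolding sl_def using 3 by (simp add: divide_simps algebra_simps)
      ultimately have "f c2 - f s \<ge> (c2 - s) * sl f c2 c3" using 3 by (simp add: mult_left_mono)
      moreover have "(c2 - s) * sl f c2 c3 \<ge> - ((c2 - s) * \<bar>sl f c2 c3\<bar>)" using 3
        by (smt (verit) abs_ge_minus_self mult_left_mono mult_minus_right)
      moreover have "(c2 - s) * \<bar>sl f c2 c3\<bar> \<le> (b - a) * \<bar>sl f c2 c3\<bar>" using 3 s cs by (intro mult_right_mono) auto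
      ultimately show ?thesis using ab by (smt (verit) abs_ge_self mult_nonneg_nonneg abs_ge_zero)
    qed
  qed
qed

lemma pos_min_finite:
  assumes "finite A" "\<And>a. a \<in> A \<Longrightarrow> \<exists>d>0. P a d"
    and mono: "\<And>a d d'. P a d \<Longrightarrow> 0 < d' \<Longrightarrow> d' \<le> d \<Longrightarrow> P a d'"
  shows "\<exists>d>0. \<forall>a\<in>A. P a (d::real)"
  using assms(1,2)
proof (induction A rule: finite_induct)
  case empty then show ?case by (intro exI[of _ 1]) auto
next
  case (insert x F)
  obtain d where d: "d > 0" "\<forall>a\<in>F. P a d" using insert by auto
  obtain d' where d': "d' > 0" "P x d'" using insert by auto
  show ?case
    by (rule exI[of _ "min d d'"]) (use d d' mono in \<open>auto simp: min_def\<close>)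
qed

context LS
begin

lemma kr_upper: "\<exists>MK\<ge>0. \<forall>i s. \<bar>s\<bar> < 1 \<longrightarrow> s \<noteq> 0 \<longrightarrow> kr i s \<le> MK"
proof -
  have "\<exists>M. \<forall>s\<in>{-1<..<0}. kr i s \<le> M" for i by (rule concave_bdd_above[OF kr_cn]) auto
  moreover have "\<exists>M. \<forall>s\<in>{0<..<1}. kr i s \<le> M" for i by (rule concave_bdd_above[OF kr_cp]) auto
  ultimately obtain M1 M2 where M1: "\<And>i s. s \<in> {-1<..<0} \<Longrightarrow> kr i s \<le> M1 i"
    and M2: "\<And>i s. s \<in> {0<..<1} \<Longrightarrow> kr i s \<le> M2 i" by metis
  define MK where "MK = (\<Sum>i\<in>UNIV. \<bar>M1 i\<bar> + \<bar>M2 i\<bar>)"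
  have le: "\<bar>M1 i\<bar> + \<bar>M2 i\<bar> \<le> MK" for i
    unfolding MK_def by (rule member_le_sum) auto
  show ?thesis
  proof (intro exI[of _ MK] conjI allI impI)
    show "MK \<ge> 0" unfolding MK_def by (intro sum_nonneg) auto
    fix i and s :: real assume s: "\<bar>s\<bar> < 1" "s \<noteq> 0"
    then consider "s \<in> {-1<..<0}" | "s \<in> {0<..<1}" by (cases "s < 0") (auto simp: abs_if)
    then show "kr i s \<le> MK"
    proof cases
      case 1 then show ?thesis using M1[OF 1, of i] le[of i] by linarith
    next
      case 2 then show ?thesis using M2[OF 2, of i] le[of i] by linarith
    qed
  qed
qed

lemma kr_near0: "\<exists>\<mu>>0. \<mu> \<le> 1 \<and> (\<forall>i s. s \<noteq> 0 \<longrightarrow> \<bar>s\<bar> < \<mu> \<longrightarrow> kr i s < B)"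
proof -
  have "\<exists>d>0. \<forall>s. s \<noteq> 0 \<longrightarrow> \<bar>s\<bar> < d \<longrightarrow> K i s < ereal B" for i
  proof -
    have "eventually (\<lambda>s. K i s < ereal B) (at_right 0)" using K_lim_right[of i] unfolding tendsto_MInfty by auto
    then obtain b1 where b1: "b1 > 0" "\<And>s. 0 < s \<Longrightarrow> s < b1 \<Longrightarrow> K i s < ereal B"
      unfolding eventually_at_right_field by auto
    have "eventually (\<lambda>s. K i s < ereal B) (at_left 0)" using K_lim_left[of i] unfolding tendsto_MInfty by auto
    then obtain b2 where b2: "b2 < 0" "\<And>s. b2 < s \<Longrightarrow> s < 0 \<Longrightarrow> K i s < ereal B"
      unfolding eventually_at_left_field by auto
    show ?thesis
      by (rule exI[of _ "min b1 (- b2)"]) (use b1 b2 in \<open>auto simp: abs_if split: if_splits\<close>)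
  qed
  then obtain d where d: "d > 0" "\<forall>i\<in>UNIV. \<forall>s. s \<noteq> 0 \<longrightarrow> \<bar>s\<bar> < d \<longrightarrow> K i s < ereal B"
    using pos_min_finite[of "UNIV :: 'n set" "\<lambda>i d. \<forall>s. s \<noteq> 0 \<longrightarrow> \<bar>s\<bar> < d \<longrightarrow> K i s < ereal B"]
    by fastforce
  show ?thesis
  proof (intro exI[of _ "min d 1"] conjI allI impI)
    fix i s assume s: "s \<noteq> 0" "\<bar>s\<bar> < min d 1"
    then have "s \<in> {-1<..<0} \<union> {0<..<1}" by (cases "s < 0") (auto simp: abs_if)
    then have "\<exists>r. K i s = ereal r" using K_fin by blast
    then obtain r where r: "K i s = ereal r" by blast
    moreover have "K i s < ereal B" using d s by auto
    ultimately show "kr i s < B" by simp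
  qed (use d in auto)
qed

lemma J_near0:
  assumes "(J \<longlongrightarrow> -\<infinity>) (at_right 0)"
  shows "\<exists>\<mu>>0. \<forall>t. 0 < t \<longrightarrow> t < \<mu> \<longrightarrow> J t < ereal B"
proof -
  have "eventually (\<lambda>s. J s < ereal B) (at_right 0)" using assms unfolding tendsto_MInfty by auto
  then show ?thesis unfolding eventually_at_right_field by auto
qed

lemma J_near1:
  assumes "(J \<longlongrightarrow> -\<infinity>) (at_left 1)"
  shows "\<exists>\<mu>>0. \<forall>t. 1 - \<mu> < t \<longrightarrow> t < 1 \<longrightarrow> J t < ereal B"
proof -
  have "eventually (\<lambda>s. J s < ereal B) (at_left 1)" using assms unfolding tendsto_MInfty by auto
  then obtain b where "b < 1" "\<And>s. b < s \<Longrightarrow> s < 1 \<Longrightarrow> J s < ereal B" unfolding eventually_at_left_field by auto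
  then show ?thesis by (intro exI[of _ "1 - b"]) auto
qed

end


definition cube :: "real^'n \<Rightarrow> real \<Rightarrow> (real^'n) set" where
  "cube c d = {x. \<forall>i. \<bar>x $ i - c $ i\<bar> < d}"

lemma cube_mono: "d' \<le> d \<Longrightarrow> cube c d' \<subseteq> cube c d"
  unfolding cube_def by (auto intro: less_le_trans)

lemma card_pos_n: "CARD('n::finite) \<ge> 1"
  by (simp add: Suc_leI)

lemma cube_norm:
  fixes x c :: "real^'n"
  assumes "x \<in> cube c (e / CARD('n))" "e > 0"
  shows "dist x c < e"
proof -
  have "dist x c = norm (x - c)" by (simp add: dist_norm)
  also have "\<dots> \<le> (\<Sum>i\<in>UNIV. \<bar>(x - c) $ i\<bar>)" by (rule norm_le_l1_cart)
  also have "\<dots> < (\<Sum>i\<in>(UNIV::'n set). e / CARD('n))"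
    by (rule sum_strict_mono) (use assms in \<open>auto simp: cube_def\<close>)
  also have "\<dots> = e" by simp
  finally show ?thesis .
qed

context LS
begin

lemma kr_isCont:
  assumes "s \<in> {-1<..<0} \<union> {0<..<1}"
  shows "isCont (kr i) s"
proof -
  have "continuous_on {-1<..<0} (kr i)" by (rule concave_cont[OF kr_cn])
  moreover have "continuous_on {0<..<1} (kr i)" by (rule concave_cont[OF kr_cp])
  ultimately show ?thesis using assms by (auto simp: continuous_on_eq_continuous_at)
qed

lemma loc:
  fixes y0 :: "real^('n::{finite,linorder})"
  assumes y0Y: "y0 \<in> Yset J K"
  shows "\<exists>\<delta> \<mu> \<mu>'. 0 < \<delta> \<and> 0 < \<mu> \<and> \<mu> < 1 \<and> 0 < \<mu>' \<and> \<mu>' < 1 \<and> \<delta> \<le> \<mu>/8 \<and> \<delta> \<le> \<mu>' \<and>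
    (\<forall>x\<in>cube y0 \<delta>. x \<in> simplexS \<and> (\<forall>i. \<mu>' \<le> x$i \<and> x$i \<le> 1 - \<mu>') \<and>
        (\<forall>j\<le>CARD('n). mfun J K j x \<noteq> -\<infinity> \<and> mfun J K j x \<noteq> \<infinity>)) \<and>
    (\<forall>x\<in>cube y0 \<delta>. \<forall>j\<le>CARD('n). \<forall>t\<in>{ypt x j..ypt x (Suc j)}. F x t > ereal (mr j x - 1) \<longrightarrow>
         J t \<noteq> -\<infinity> \<and> (\<forall>i. \<mu> \<le> \<bar>t - x$i\<bar>)) \<and>
    ((\<forall>x\<in>cube y0 \<delta>. \<forall>j\<le>CARD('n). \<forall>t\<in>{ypt x j..ypt x (Suc j)}. F x t > ereal (mr j x - 1) \<longrightarrow> \<mu> \<le> t) \<or>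
     (\<forall>x\<in>cube y0 \<delta>. \<forall>j\<le>CARD('n). \<forall>t\<in>{ypt x j..ypt x (Suc j)}. F x t > ereal (mr j x - 1) \<longrightarrow> t \<le> 1 - \<mu>))"
proof -
  let ?n = "CARD('n)"
  have y0: "y0 \<in> simplexS" and mfin: "\<And>j. j \<le> ?n \<Longrightarrow> mfun J K j y0 \<noteq> -\<infinity>"
    using y0Y unfolding Yset_def by auto
  have "\<exists>d>0. \<forall>i\<in>UNIV. d \<le> y0$i \<and> d \<le> 1 - y0$i"
  proof (rule pos_min_finite)
    fix i show "\<exists>d>0. d \<le> y0$i \<and> d \<le> 1 - y0$i"
      using simplexS_D[OF y0, of i] by (intro exI[of _ "min (y0$i) (1 - y0$i)"]) auto
  qed auto
  then obtain \<mu>0 where \<mu>0: "\<mu>0 > 0" "\<forall>i\<in>UNIV. \<mu>0 \<le> y0$i \<and> \<mu>0 \<le> 1 - y0$i" by blast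
  define \<mu>' where "\<mu>' = \<mu>0 / 2"
  have mu0i: "\<mu>0 \<le> y0$i \<and> y0$i < 1" for i using \<mu>0(2) simplexS_D(2)[OF y0] by auto
  have \<mu>0_lt: "\<mu>0 < 1" using mu0i[of undefined] by linarith
  have "\<exists>d>0. \<forall>p\<in>UNIV. fst p < snd p \<longrightarrow> d \<le> y0 $ snd p - y0 $ fst p"
  proof (rule pos_min_finite)
    fix p :: "'n \<times> 'n"
    show "\<exists>d>0. fst p < snd p \<longrightarrow> d \<le> y0 $ snd p - y0 $ fst p"
    proof (cases "fst p < snd p")
      case True then show ?thesis using simplexS_D(3)[OF y0 True]
        by (intro exI[of _ "y0 $ snd p - y0 $ fst p"]) auto
    qed (intro exI[of _ 1], auto)
  qed auto
  then obtain g0 where g0: "g0 > 0" "\<forall>p\<in>UNIV. fst p < snd p \<longrightarrow> g0 \<le> y0 $ snd p - y0 $ fst p" by blast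
  have "\<exists>t\<in>{ypt y0 j..ypt y0 (Suc j)}. -\<infinity> < F y0 t" if "j \<le> ?n" for j
  proof -
    have "-\<infinity> < mfun J K j y0" using mfin[OF that] by (cases "mfun J K j y0") auto
    then show ?thesis unfolding mfun_def less_SUP_iff by blast
  qed
  then obtain tt where tt: "\<And>j. j \<le> ?n \<Longrightarrow> tt j \<in> {ypt y0 j..ypt y0 (Suc j)} \<and> -\<infinity> < F y0 (tt j)"
    by metis
  have tt01: "tt j \<in> {0..1}" if "j \<le> ?n" for j
    using tt[OF that] ypt_range[OF y0, of j] ypt_range[OF y0, of "Suc j"] by auto
  have ttJ: "J (tt j) \<noteq> -\<infinity>" and ttne: "\<And>i. tt j \<noteq> y0 $ i" if "j \<le> ?n" for j
    using F_minf[OF y0 tt01[OF that]] tt[OF that] by auto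
  define c where "c j = Jr (tt j) + (\<Sum>i\<in>UNIV. kr i (tt j - y0 $ i))" for j
  have "\<exists>d>0. \<forall>p\<in>{..?n}\<times>(UNIV::'n set). d \<le> \<bar>tt (fst p) - y0 $ snd p\<bar>"
  proof (rule pos_min_finite)
    fix p assume "p \<in> {..?n}\<times>(UNIV::'n set)"
    then have "tt (fst p) \<noteq> y0 $ snd p" using ttne by auto
    then show "\<exists>d>0. d \<le> \<bar>tt (fst p) - y0 $ snd p\<bar>" by (intro exI[of _ "\<bar>tt (fst p) - y0 $ snd p\<bar>"]) auto
  qed auto
  then obtain \<gamma> where \<gamma>: "\<gamma> > 0" "\<forall>p\<in>{..?n}\<times>(UNIV::'n set). \<gamma> \<le> \<bar>tt (fst p) - y0 $ snd p\<bar>" by blast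
  have cont_j: "\<exists>d>0. \<forall>x. x \<in> cube y0 d \<longrightarrow> \<bar>(\<Sum>i\<in>UNIV. kr i (tt j - x $ i)) - (\<Sum>i\<in>UNIV. kr i (tt j - y0 $ i))\<bar> < 1"
    if j: "j \<le> ?n" for j
  proof -
    have "isCont (\<lambda>x::real^('n::{finite,linorder}). \<Sum>i\<in>UNIV. kr i (tt j - x $ i)) y0"
    proof (intro continuous_sum)
      fix i :: 'n
      have s: "tt j - y0 $ i \<in> {-1<..<0} \<union> {0<..<1}"
        using ttne[OF j, of i] tt01[OF j] simplexS_D[OF y0, of i] by auto
      have "isCont (\<lambda>x::real^('n::{finite,linorder}). tt j - x $ i) y0" by (intro continuous_intros)
      then show "isCont (\<lambda>x::real^('n::{finite,linorder}). kr i (tt j - x $ i)) y0"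
        using continuous_at_compose[of y0 "\<lambda>x::real^('n::{finite,linorder}). tt j - x $ i" "kr i"] kr_isCont[OF s, of i]
        by (simp add: o_def)
    qed
    then obtain e where e: "e > 0" "\<And>x. dist x y0 < e \<Longrightarrow> dist (\<Sum>i\<in>UNIV. kr i (tt j - x $ i)) (\<Sum>i\<in>UNIV. kr i (tt j - y0 $ i)) < 1"
      unfolding continuous_at_eps_delta by (metis zero_less_one)
    show ?thesis
    proof (intro exI[of _ "e / ?n"] conjI allI impI)
      show "e / ?n > 0" using e by simp
      fix x assume "x \<in> cube y0 (e / ?n)"
      then have "dist x y0 < e" using cube_norm e by blast
      then show "\<bar>(\<Sum>i\<in>UNIV. kr i (tt j - x $ i)) - (\<Sum>i\<in>UNIV. kr i (tt j - y0 $ i))\<bar> < 1"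
        using e(2) by (simp add: dist_real_def)
    qed
  qed
  have "\<exists>d>0. \<forall>j\<in>{..?n}. \<forall>x. x \<in> cube y0 d \<longrightarrow>
      \<bar>(\<Sum>i\<in>UNIV. kr i (tt j - x $ i)) - (\<Sum>i\<in>UNIV. kr i (tt j - y0 $ i))\<bar> < 1"
  proof (rule pos_min_finite)
    fix j d d' assume A: "\<forall>x. x \<in> cube y0 d \<longrightarrow>
      \<bar>(\<Sum>i\<in>UNIV. kr i (tt j - x $ i)) - (\<Sum>i\<in>UNIV. kr i (tt j - y0 $ i))\<bar> < 1" "0 < d'" "d' \<le> d"
    show "\<forall>x. x \<in> cube y0 d' \<longrightarrow>
      \<bar>(\<Sum>i\<in>UNIV. kr i (tt j - x $ i)) - (\<Sum>i\<in>UNIV. kr i (tt j - y0 $ i))\<bar> < 1"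
      using A cube_mono[OF A(3), of y0] by blast
  qed (use cont_j in auto)
  then obtain \<delta>1 where \<delta>1: "\<delta>1 > 0" "\<forall>j\<in>{..?n}. \<forall>x. x \<in> cube y0 \<delta>1 \<longrightarrow>
      \<bar>(\<Sum>i\<in>UNIV. kr i (tt j - x $ i)) - (\<Sum>i\<in>UNIV. kr i (tt j - y0 $ i))\<bar> < 1" by blast
  define L where "L = - (\<Sum>j\<le>?n. \<bar>c j\<bar>) - 1"
  have cL: "L \<le> c j - 1" if "j \<le> ?n" for j
  proof -
    have "\<bar>c j\<bar> \<le> (\<Sum>j\<le>?n. \<bar>c j\<bar>)" by (rule member_le_sum) (use that in auto)
    then show ?thesis unfolding L_def by linarith
  qed
  obtain MJ where MJ: "\<forall>t\<in>{0..1}. J t \<le> ereal MJ" using J_bound by blast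
  obtain MK where MK: "MK \<ge> 0" "\<forall>i s. \<bar>s\<bar> < 1 \<longrightarrow> s \<noteq> 0 \<longrightarrow> kr i s \<le> MK" using kr_upper by blast
  define B1 where "B1 = L - 2 - MJ - real ?n * MK"
  obtain \<mu>1 where \<mu>1: "\<mu>1 > 0" "\<mu>1 \<le> 1" "\<forall>i s. s \<noteq> 0 \<longrightarrow> \<bar>s\<bar> < \<mu>1 \<longrightarrow> kr i s < B1"
    using kr_near0[of B1] by blast
  define B2 where "B2 = L - 2 - real ?n * MK"
  obtain \<mu>2 where \<mu>2: "\<mu>2 > 0" and bd: "(J 0 = -\<infinity> \<and> (\<forall>t. 0 < t \<longrightarrow> t < \<mu>2 \<longrightarrow> J t < ereal B2)) \<or>
      (J 1 = -\<infinity> \<and> (\<forall>t. 1 - \<mu>2 < t \<longrightarrow> t < 1 \<longrightarrow> J t < ereal B2))"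
  proof -
    from bdry show ?thesis
    proof
      assume a: "J 0 = -\<infinity> \<and> (J \<longlongrightarrow> -\<infinity>) (at_right 0)"
      then obtain m where "m > 0" "\<forall>t. 0 < t \<longrightarrow> t < m \<longrightarrow> J t < ereal B2" using J_near0[of B2] by blast
      then show ?thesis using that a by blast
    next
      assume a: "J 1 = -\<infinity> \<and> (J \<longlongrightarrow> -\<infinity>) (at_left 1)"
      then obtain m where "m > 0" "\<forall>t. 1 - m < t \<longrightarrow> t < 1 \<longrightarrow> J t < ereal B2" using J_near1[of B2] by blast
      then show ?thesis using that a by blast
    qed
  qed
  define \<mu> where "\<mu> = min (min \<mu>1 \<mu>2) (1/2)"
  have \<mu>: "0 < \<mu>" "\<mu> < 1" "\<mu> \<le> \<mu>1" "\<mu> \<le> \<mu>2" using \<mu>1 \<mu>2 unfolding \<mu>_def by auto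
  define \<delta> where "\<delta> = min (min \<delta>1 \<mu>') (min (min (g0/2) \<gamma>) (\<mu>/8))"
  have \<delta>: "0 < \<delta>" "\<delta> \<le> \<delta>1" "\<delta> \<le> \<mu>'" "\<delta> \<le> g0/2" "\<delta> \<le> \<gamma>" "\<delta> \<le> \<mu>/8"
    using \<delta>1(1) \<mu>0(1) g0(1) \<gamma>(1) \<mu>(1) unfolding \<delta>_def \<mu>'_def by (simp_all add: min_le_iff_disj)
  have xprops: "x \<in> simplexS \<and> (\<forall>i. \<mu>' \<le> x$i \<and> x$i \<le> 1 - \<mu>') \<and>
        (\<forall>j\<le>?n. ereal L < mfun J K j x \<and> mfun J K j x \<le> ereal (MJ + real ?n * MK))"
    if x: "x \<in> cube y0 \<delta>" for x
  proof -
    have xd: "\<bar>x$i - y0$i\<bar> < \<delta>" for i using x unfolding cube_def by auto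
    have xb: "\<mu>' \<le> x$i \<and> x$i \<le> 1 - \<mu>'" for i
    proof -
      have "\<mu>0 \<le> y0$i \<and> \<mu>0 \<le> 1 - y0$i" using \<mu>0(2) by auto
      then show ?thesis using xd[of i] \<delta> unfolding \<mu>'_def by (auto simp: abs_less_iff)
    qed
    have xs: "x \<in> simplexS" unfolding simplexS_def
    proof (intro CollectI conjI allI impI)
      fix i show "0 < x$i" "x$i < 1" using xb[of i] \<mu>0 unfolding \<mu>'_def by auto
    next
      fix i j :: 'n assume ij: "i < j"
      have "g0 \<le> y0$j - y0$i" using g0(2) ij by (metis UNIV_I fst_conv snd_conv)
      then show "x$i < x$j" using xd[of i] xd[of j] \<delta> by (auto simp: abs_less_iff)
    qed
    have ttI: "tt j \<in> {ypt x j..ypt x (Suc j)}" if j: "j \<le> ?n" for j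
    proof -
      have tj: "ypt y0 j \<le> tt j" "tt j \<le> ypt y0 (Suc j)" using tt[OF j] by auto
      have gj: "\<gamma> \<le> \<bar>tt j - y0 $ i\<bar>" for i using \<gamma>(2) j by auto
      have lo: "ypt x j \<le> tt j"
      proof (cases "j = 0")
        case True then show ?thesis using tt01[OF j] unfolding ypt_def by simp
      next
        case False
        then have e: "ypt x j = x $ idx_of j" "ypt y0 j = y0 $ idx_of j" using j unfolding ypt_def by auto
        show ?thesis using tj(1) gj[of "idx_of j"] xd[of "idx_of j"] \<delta> e by (auto simp: abs_less_iff abs_if split: if_splits)
      qed
      have hi: "tt j \<le> ypt x (Suc j)"
      proof (cases "Suc j = ?n + 1")
        case True then show ?thesis using tt01[OF j] unfolding ypt_def by simp
      next
        case False
        then have e: "ypt x (Suc j) = x $ idx_of (Suc j)" "ypt y0 (Suc j) = y0 $ idx_of (Suc j)" using j unfolding ypt_def by auto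
        show ?thesis using tj(2) gj[of "idx_of (Suc j)"] xd[of "idx_of (Suc j)"] \<delta> e by (auto simp: abs_less_iff abs_if split: if_splits)
      qed
      show ?thesis using lo hi by auto
    qed
    have ttne: "tt j \<noteq> x $ i" if j: "j \<le> ?n" for j i
    proof -
      have "\<gamma> \<le> \<bar>tt j - y0 $ i\<bar>" using \<gamma>(2) j by auto
      then show ?thesis using xd[of i] \<delta> by auto
    qed
    have Fbig: "ereal L < F x (tt j)" if j: "j \<le> ?n" for j
    proof -
      have "F x (tt j) = ereal (Jr (tt j) + (\<Sum>i\<in>UNIV. kr i (tt j - x $ i)))"
        by (rule F_eq[OF xs tt01[OF j] ttJ[OF j] ttne[OF j]])
      moreover have "\<bar>(\<Sum>i\<in>UNIV. kr i (tt j - x $ i)) - (\<Sum>i\<in>UNIV. kr i (tt j - y0 $ i))\<bar> < 1"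
        using \<delta>1(2) j cube_mono[OF \<delta>(2), of y0] x by blast
      ultimately show ?thesis using cL[OF j] unfolding c_def by (auto simp: abs_less_iff)
    qed
    have Fup: "F x t \<le> ereal (MJ + real ?n * MK)" if t: "t \<in> {0..1}" for t
    proof (cases "J t = -\<infinity> \<or> (\<exists>i. t = x $ i)")
      case True then show ?thesis using F_minf[OF xs t] by simp
    next
      case False
      then have eq: "F x t = ereal (Jr t + (\<Sum>i\<in>UNIV. kr i (t - x $ i)))" using F_eq[OF xs t] by auto
      have "J t \<le> ereal MJ" using MJ t by auto
      then have "Jr t \<le> MJ" using False J_notinf[OF t] by (cases "J t") auto
      moreover have "(\<Sum>i\<in>UNIV. kr i (t - x $ i)) \<le> (\<Sum>i\<in>(UNIV::'n set). MK)"
      proof (rule sum_mono)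
        fix i
        show "kr i (t - x $ i) \<le> MK" using MK(2) False t simplexS_D[OF xs, of i] by (auto simp: abs_if)
      qed
      ultimately show ?thesis using eq by simp
    qed
    have "ereal L < mfun J K j x \<and> mfun J K j x \<le> ereal (MJ + real ?n * MK)" if j: "j \<le> ?n" for j
    proof
      have "F x (tt j) \<le> mfun J K j x" unfolding mfun_def by (rule SUP_upper[OF ttI[OF j]])
      then show "ereal L < mfun J K j x" using Fbig[OF j] by simp
      show "mfun J K j x \<le> ereal (MJ + real ?n * MK)" unfolding mfun_def
      proof (rule SUP_least)
        fix t assume "t \<in> {ypt x j..ypt x (Suc j)}"
        then have "t \<in> {0..1}" using ypt_range[OF xs, of j] ypt_range[OF xs, of "Suc j"] by auto
        then show "F x t \<le> ereal (MJ + real ?n * MK)" by (rule Fup)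
      qed
    qed
    then show ?thesis using xs xb by auto
  qed
  have nm: "J t \<noteq> -\<infinity> \<and> (\<forall>i. t \<noteq> x $ i) \<and> L - 1 < Jr t + (\<Sum>i\<in>UNIV. kr i (t - x $ i)) \<and>
       Jr t \<le> MJ \<and> (\<forall>i0. (\<Sum>i\<in>UNIV. kr i (t - x $ i)) \<le> kr i0 (t - x $ i0) + real ?n * MK) \<and>
       (\<Sum>i\<in>UNIV. kr i (t - x $ i)) \<le> real ?n * MK"
    if x: "x \<in> cube y0 \<delta>" and j: "j \<le> ?n" and t: "t \<in> {ypt x j..ypt x (Suc j)}"
      and big: "F x t > ereal (mr j x - 1)" for x j t
  proof -
    have xs: "x \<in> simplexS" and mb: "ereal L < mfun J K j x" "mfun J K j x \<le> ereal (MJ + real ?n * MK)"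
      using xprops[OF x] j by auto
    obtain r where r: "mfun J K j x = ereal r" using mb by (cases "mfun J K j x") auto
    have rL: "L < r" using mb r by simp
    have t01: "t \<in> {0..1}" using t ypt_range[OF xs, of j] ypt_range[OF xs, of "Suc j"] by auto
    have Fne: "F x t \<noteq> -\<infinity>" using big by auto
    then have c: "J t \<noteq> -\<infinity>" "\<forall>i. t \<noteq> x $ i" using F_minf[OF xs t01] by auto
    have eq: "F x t = ereal (Jr t + (\<Sum>i\<in>UNIV. kr i (t - x $ i)))" using F_eq[OF xs t01] c by auto
    have v: "L - 1 < Jr t + (\<Sum>i\<in>UNIV. kr i (t - x $ i))" using big eq r rL by simp
    have "J t \<le> ereal MJ" using MJ t01 by auto
    then have JM: "Jr t \<le> MJ" using c J_notinf[OF t01] by (cases "J t") auto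
    have kM: "kr i (t - x $ i) \<le> MK" for i using MK(2) c t01 simplexS_D[OF xs, of i] by (auto simp: abs_if)
    have s1: "(\<Sum>i\<in>UNIV. kr i (t - x $ i)) \<le> real ?n * MK"
      using sum_mono[of UNIV "\<lambda>i. kr i (t - x $ i)" "\<lambda>i. MK"] kM by auto
    have s2: "(\<Sum>i\<in>UNIV. kr i (t - x $ i)) \<le> kr i0 (t - x $ i0) + real ?n * MK" for i0
    proof -
      have "(\<Sum>i\<in>UNIV. kr i (t - x $ i)) = kr i0 (t - x $ i0) + (\<Sum>i\<in>UNIV - {i0}. kr i (t - x $ i))"
        by (simp add: sum.remove)
      also have "(\<Sum>i\<in>UNIV - {i0}. kr i (t - x $ i)) \<le> (\<Sum>i\<in>UNIV - {i0}. MK)" by (rule sum_mono) (use kM in auto)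
      also have "\<dots> = real (card (UNIV - {i0} :: 'n set)) * MK" by simp
      also have "\<dots> \<le> real ?n * MK" using MK(1) by (intro mult_right_mono) (auto simp: card_Diff_subset)
      finally show ?thesis by simp
    qed
    show ?thesis using c v JM s1 s2 by auto
  qed
  show ?thesis
  proof (rule exI[of _ \<delta>], rule exI[of _ \<mu>], rule exI[of _ \<mu>'], intro conjI)
    show "0 < \<delta>" "0 < \<mu>" "\<mu> < 1" "\<delta> \<le> \<mu>/8" "\<delta> \<le> \<mu>'" using \<delta> \<mu> by auto
    show "0 < \<mu>'" "\<mu>' < 1" using \<mu>0 \<mu>0_lt unfolding \<mu>'_def by auto
    show "\<forall>x\<in>cube y0 \<delta>. x \<in> simplexS \<and> (\<forall>i. \<mu>' \<le> x $ i \<and> x $ i \<le> 1 - \<mu>') \<and>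
        (\<forall>j\<le>?n. mfun J K j x \<noteq> - \<infinity> \<and> mfun J K j x \<noteq> \<infinity>)"
    proof (intro ballI conjI allI impI)
      fix x j assume x: "x \<in> cube y0 \<delta>"
      show "x \<in> simplexS" using xprops[OF x] by auto
      fix i show "\<mu>' \<le> x $ i" "x $ i \<le> 1 - \<mu>'" using xprops[OF x] by auto
    next
      fix x j assume x: "x \<in> cube y0 \<delta>" and j: "j \<le> ?n"
      then show "mfun J K j x \<noteq> - \<infinity>" "mfun J K j x \<noteq> \<infinity>" using xprops[OF x] by force+
    qed
    show "\<forall>x\<in>cube y0 \<delta>. \<forall>j\<le>?n. \<forall>t\<in>{ypt x j..ypt x (Suc j)}. ereal (mr j x - 1) < F x t \<longrightarrow>
         J t \<noteq> - \<infinity> \<and> (\<forall>i. \<mu> \<le> \<bar>t - x $ i\<bar>)"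
    proof (intro ballI allI impI conjI)
      fix x j t i assume x: "x \<in> cube y0 \<delta>" and j: "j \<le> ?n" and t: "t \<in> {ypt x j..ypt x (Suc j)}"
        and big: "ereal (mr j x - 1) < F x t"
      note N = nm[OF x j t big]
      show "J t \<noteq> - \<infinity>" using N by auto
      show "\<mu> \<le> \<bar>t - x $ i\<bar>"
      proof (rule ccontr)
        assume "\<not> ?thesis"
        then have "kr i (t - x $ i) < B1" using \<mu>1(3) N \<mu> by auto
        then show False using N unfolding B1_def by (smt (verit))
      qed
    qed
    show "(\<forall>x\<in>cube y0 \<delta>. \<forall>j\<le>?n. \<forall>t\<in>{ypt x j..ypt x (Suc j)}. ereal (mr j x - 1) < F x t \<longrightarrow> \<mu> \<le> t) \<or>
          (\<forall>x\<in>cube y0 \<delta>. \<forall>j\<le>?n. \<forall>t\<in>{ypt x j..ypt x (Suc j)}. ereal (mr j x - 1) < F x t \<longrightarrow> t \<le> 1 - \<mu>)"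
      using bd
    proof
      assume b0: "J 0 = -\<infinity> \<and> (\<forall>t. 0 < t \<longrightarrow> t < \<mu>2 \<longrightarrow> J t < ereal B2)"
      have "\<forall>x\<in>cube y0 \<delta>. \<forall>j\<le>?n. \<forall>t\<in>{ypt x j..ypt x (Suc j)}. ereal (mr j x - 1) < F x t \<longrightarrow> \<mu> \<le> t"
      proof (intro ballI allI impI)
        fix x j t assume x: "x \<in> cube y0 \<delta>" and j: "j \<le> ?n" and t: "t \<in> {ypt x j..ypt x (Suc j)}"
          and big: "ereal (mr j x - 1) < F x t"
        note N = nm[OF x j t big]
        have xs: "x \<in> simplexS" using xprops[OF x] by auto
        have t0: "0 \<le> t" using t ypt_range[OF xs, of j] by auto
        show "\<mu> \<le> t"
        proof (rule ccontr)
          assume "\<not> \<mu> \<le> t"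
          moreover have "t \<noteq> 0" using N b0 by auto
          ultimately have "J t < ereal B2" using b0 t0 \<mu> by auto
          then have "Jr t < B2" using N by (cases "J t") auto
          then show False using N unfolding B2_def by linarith
        qed
      qed
      then show ?thesis by blast
    next
      assume b1: "J 1 = -\<infinity> \<and> (\<forall>t. 1 - \<mu>2 < t \<longrightarrow> t < 1 \<longrightarrow> J t < ereal B2)"
      have "\<forall>x\<in>cube y0 \<delta>. \<forall>j\<le>?n. \<forall>t\<in>{ypt x j..ypt x (Suc j)}. ereal (mr j x - 1) < F x t \<longrightarrow> t \<le> 1 - \<mu>"
      proof (intro ballI allI impI)
        fix x j t assume x: "x \<in> cube y0 \<delta>" and j: "j \<le> ?n" and t: "t \<in> {ypt x j..ypt x (Suc j)}"
          and big: "ereal (mr j x - 1) < F x t"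
        note N = nm[OF x j t big]
        have xs: "x \<in> simplexS" using xprops[OF x] by auto
        have t1: "t \<le> 1" using t ypt_range[OF xs, of "Suc j"] by auto
        show "t \<le> 1 - \<mu>"
        proof (rule ccontr)
          assume "\<not> t \<le> 1 - \<mu>"
          moreover have "t \<noteq> 1" using N b1 by auto
          ultimately have "J t < ereal B2" using b1 t1 \<mu> by auto
          then have "Jr t < B2" using N by (cases "J t") auto
          then show False using N unfolding B2_def by linarith
        qed
      qed
      then show ?thesis by blast
    qed
  qed
qed
end


locale LS2 = LS K J for K :: "'n::{finite,linorder} \<Rightarrow> real \<Rightarrow> ereal" and J +
  fixes y0 :: "real^('n::{finite,linorder})" and \<delta> \<mu> \<mu>' :: real
  assumes cst: "0 < \<delta>" "0 < \<mu>" "\<mu> < 1" "0 < \<mu>'" "\<mu>' < 1" "\<delta> \<le> \<mu>/8" "\<delta> \<le> \<mu>'"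
    and cube_ok: "\<forall>x\<in>cube y0 \<delta>. x \<in> simplexS \<and> (\<forall>i. \<mu>' \<le> x$i \<and> x$i \<le> 1 - \<mu>') \<and>
        (\<forall>j\<le>CARD('n). mfun J K j x \<noteq> -\<infinity> \<and> mfun J K j x \<noteq> \<infinity>)"
    and nearmax: "\<forall>x\<in>cube y0 \<delta>. \<forall>j\<le>CARD('n). \<forall>t\<in>{ypt x j..ypt x (Suc j)}. F x t > ereal (mr j x - 1) \<longrightarrow>
         J t \<noteq> -\<infinity> \<and> (\<forall>i. \<mu> \<le> \<bar>t - x$i\<bar>)"
    and bside: "(\<forall>x\<in>cube y0 \<delta>. \<forall>j\<le>CARD('n). \<forall>t\<in>{ypt x j..ypt x (Suc j)}. F x t > ereal (mr j x - 1) \<longrightarrow> \<mu> \<le> t) \<or>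
     (\<forall>x\<in>cube y0 \<delta>. \<forall>j\<le>CARD('n). \<forall>t\<in>{ypt x j..ypt x (Suc j)}. F x t > ereal (mr j x - 1) \<longrightarrow> t \<le> 1 - \<mu>)"
begin

definition NM :: "real^('n::{finite,linorder}) \<Rightarrow> nat \<Rightarrow> real \<Rightarrow> bool" where
  "NM x j t \<longleftrightarrow> x \<in> cube y0 \<delta> \<and> j \<le> CARD('n) \<and> t \<in> {ypt x j..ypt x (Suc j)} \<and> F x t > ereal (mr j x - 1)"

lemma cubeD:
  assumes "x \<in> cube y0 \<delta>"
  shows "x \<in> simplexS" "\<mu>' \<le> x$i" "x$i \<le> 1 - \<mu>'"
    "j \<le> CARD('n) \<Longrightarrow> mfun J K j x = ereal (mr j x)"
  using cube_ok assms by (auto intro!: ereal_real'[symmetric])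

lemma cube_close:
  assumes "a \<in> cube y0 \<delta>" "b \<in> cube y0 \<delta>"
  shows "\<bar>a$i - b$i\<bar> < 2 * \<delta>"
proof -
  have "\<bar>a$i - y0$i\<bar> < \<delta>" "\<bar>b$i - y0$i\<bar> < \<delta>" using assms unfolding cube_def by auto
  then show ?thesis by (smt (verit))
qed

lemma NM_facts:
  assumes "NM x j t"
  shows "x \<in> cube y0 \<delta>" "j \<le> CARD('n)" "0 \<le> t" "t \<le> 1" "J t \<noteq> -\<infinity>" "\<mu> \<le> \<bar>t - x$i\<bar>"
    "idx_pos i < j \<Longrightarrow> x$i + \<mu> \<le> t" "j \<le> idx_pos i \<Longrightarrow> t \<le> x$i - \<mu>"
    "F x t = ereal (Jr t + (\<Sum>i\<in>UNIV. kr i (t - x $ i)))"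
proof -
  have x: "x \<in> cube y0 \<delta>" and j: "j \<le> CARD('n)" and t: "t \<in> {ypt x j..ypt x (Suc j)}"
    and big: "F x t > ereal (mr j x - 1)" using assms unfolding NM_def by auto
  have xs: "x \<in> simplexS" using cubeD[OF x] by auto
  show "x \<in> cube y0 \<delta>" "j \<le> CARD('n)" by fact+
  show t01: "0 \<le> t" "t \<le> 1" using t ypt_range[OF xs, of j] ypt_range[OF xs, of "Suc j"] by auto
  have nm: "J t \<noteq> -\<infinity>" "\<And>i. \<mu> \<le> \<bar>t - x$i\<bar>" using nearmax x j t big by auto
  show "J t \<noteq> -\<infinity>" "\<mu> \<le> \<bar>t - x$i\<bar>" using nm by auto
  have s: "idx_pos i < j \<Longrightarrow> x $ i \<le> t" "j \<le> idx_pos i \<Longrightarrow> t \<le> x $ i"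
    using kernel_side[OF xs j, of t i] t by auto
  show "idx_pos i < j \<Longrightarrow> x$i + \<mu> \<le> t" using s nm(2)[of i] by auto
  show "j \<le> idx_pos i \<Longrightarrow> t \<le> x$i - \<mu>" using s nm(2)[of i] by auto
  have "\<And>i. t \<noteq> x $ i" using nm(2) cst by (metis abs_zero diff_self not_le)
  then show "F x t = ereal (Jr t + (\<Sum>i\<in>UNIV. kr i (t - x $ i)))"
    using F_eq[OF xs _ nm(1)] t01 by auto
qed

lemma NM_exists:
  assumes x: "x \<in> cube y0 \<delta>" and j: "j \<le> CARD('n)" and eta: "0 < \<eta>" "\<eta> \<le> 1"
  shows "\<exists>t. NM x j t \<and> F x t > ereal (mr j x - \<eta>)"
proof -
  have m: "mfun J K j x = ereal (mr j x)" using cubeD(4)[OF x j] .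
  then obtain r where r: "mfun J K j x = ereal r" by blast
  then have "mr j x = r" by simp
  then have "ereal (mr j x - \<eta>) < mfun J K j x" using r eta by simp
  then obtain t where t: "t \<in> {ypt x j..ypt x (Suc j)}" "ereal (mr j x - \<eta>) < F x t"
    unfolding mfun_def less_SUP_iff by blast
  have le: "ereal (mr j x - 1) \<le> ereal (mr j x - \<eta>)" using eta by simp
  have "ereal (mr j x - 1) < F x t" by (rule le_less_trans[OF le t(2)])
  then have "NM x j t" unfolding NM_def using x j t by blast
  then show ?thesis using t by blast
qed

definition G :: "real^('n::{finite,linorder}) \<Rightarrow> real^('n::{finite,linorder}) \<Rightarrow> real \<Rightarrow> real" where
  "G a b w = (\<Sum>i\<in>UNIV. kr i (w - b$i) - kr i (w - a$i))"

lemma NM_transfer: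
  assumes nm: "NM a j w" and b: "b \<in> cube y0 \<delta>"
  shows "ereal (Jr w + (\<Sum>i\<in>UNIV. kr i (w - b $ i))) \<le> mfun J K j b"
proof -
  have a: "a \<in> cube y0 \<delta>" and j: "j \<le> CARD('n)" using NM_facts[OF nm] by auto
  have bs: "b \<in> simplexS" using cubeD[OF b] by auto
  have cl: "\<bar>a$i - b$i\<bar> < 2 * \<delta>" for i using cube_close[OF a b] .
  have lo: "ypt b j \<le> w"
  proof (cases "j = 0")
    case True then show ?thesis using NM_facts[OF nm] unfolding ypt_def by simp
  next
    case False
    then have e: "ypt b j = b $ idx_of j" and p: "idx_pos (idx_of j :: 'n) < j"
      using j idx_pos_of[where 'n='n, of j] unfolding ypt_def by auto
    show ?thesis using NM_facts(7)[OF nm p] cl[of "idx_of j"] cst e by (auto simp: abs_less_iff)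
  qed
  have hi: "w \<le> ypt b (Suc j)"
  proof (cases "Suc j = CARD('n) + 1")
    case True then show ?thesis using NM_facts[OF nm] unfolding ypt_def by simp
  next
    case False
    then have e: "ypt b (Suc j) = b $ idx_of (Suc j)" and p: "j \<le> idx_pos (idx_of (Suc j) :: 'n)"
      using j idx_pos_of[where 'n='n, of "Suc j"] unfolding ypt_def by auto
    show ?thesis using NM_facts(8)[OF nm p] cl[of "idx_of (Suc j)"] cst e by (auto simp: abs_less_iff)
  qed
  have ne: "w \<noteq> b $ i" for i
    using NM_facts(6)[OF nm, of i] cl[of i] cst by (auto simp: abs_less_iff abs_if split: if_splits)
  have "F b w = ereal (Jr w + (\<Sum>i\<in>UNIV. kr i (w - b $ i)))"
    using F_eq[OF bs _ NM_facts(5)[OF nm] ne] NM_facts(3,4)[OF nm] by auto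
  moreover have "F b w \<le> mfun J K j b" unfolding mfun_def by (rule SUP_upper) (use lo hi in auto)
  ultimately show ?thesis by simp
qed

lemma delta_lower:
  assumes nm: "NM a j w" and eta: "F a w > ereal (mr j a - \<eta>)" and b: "b \<in> cube y0 \<delta>"
  shows "mr j b - mr j a > G a b w - \<eta>"
proof -
  have j: "j \<le> CARD('n)" using NM_facts[OF nm] by auto
  have "ereal (Jr w + (\<Sum>i\<in>UNIV. kr i (w - b $ i))) \<le> ereal (mr j b)"
    using NM_transfer[OF nm b] cubeD(4)[OF b j] by simp
  then have 1: "Jr w + (\<Sum>i\<in>UNIV. kr i (w - b $ i)) \<le> mr j b" by simp
  have 2: "Jr w + (\<Sum>i\<in>UNIV. kr i (w - a $ i)) > mr j a - \<eta>" using eta NM_facts(9)[OF nm] by simp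
  have "G a b w = (\<Sum>i\<in>UNIV. kr i (w - b $ i)) - (\<Sum>i\<in>UNIV. kr i (w - a $ i))"
    unfolding G_def by (simp add: sum_subtractf)
  then show ?thesis using 1 2 by linarith
qed

lemma G_swap: "G b a w = - G a b w"
  unfolding G_def by (simp add: sum_negf[symmetric])

lemma delta_upper:
  assumes nm: "NM b j w" and eta: "F b w > ereal (mr j b - \<eta>)" and a: "a \<in> cube y0 \<delta>"
  shows "mr j b - mr j a < G a b w + \<eta>"
  using delta_lower[OF nm eta a] G_swap[of a b w] by linarith

end


context LS2
begin

definition T :: "real^('n::{finite,linorder}) \<Rightarrow> real^('n::{finite,linorder}) \<Rightarrow> ('n::{finite,linorder}) \<Rightarrow> real \<Rightarrow> real" where
  "T a b i w = sl (kr i) (w - a$i) (w - b$i)"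

lemma G_T: "G a b w = (\<Sum>i\<in>UNIV. (a$i - b$i) * T a b i w)"
  unfolding G_def
proof (rule sum.cong[OF refl])
  fix i
  show "kr i (w - b $ i) - kr i (w - a $ i) = (a $ i - b $ i) * T a b i w"
  proof (cases "a$i = b$i")
    case True then show ?thesis by simp
  next
    case False
    then show ?thesis unfolding T_def sl_def by (simp add: divide_simps algebra_simps)
  qed
qed

definition NMab :: "real^('n::{finite,linorder}) \<Rightarrow> real^('n::{finite,linorder}) \<Rightarrow> nat \<Rightarrow> real \<Rightarrow> bool" where
  "NMab a b j w \<longleftrightarrow> NM a j w \<or> NM b j w"

lemma NMab_side:
  assumes a: "a \<in> cube y0 \<delta>" and b: "b \<in> cube y0 \<delta>" and nm: "NMab a b j w"
  shows "idx_pos i < j \<Longrightarrow> 3*\<mu>/4 \<le> w - a$i \<and> 3*\<mu>/4 \<le> w - b$i"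
    "j \<le> idx_pos i \<Longrightarrow> w - a$i \<le> -3*\<mu>/4 \<and> w - b$i \<le> -3*\<mu>/4"
    "-1 + \<mu>' \<le> w - a$i" "w - a$i \<le> 1 - \<mu>'" "-1 + \<mu>' \<le> w - b$i" "w - b$i \<le> 1 - \<mu>'"
    "0 \<le> w" "w \<le> 1"
proof -
  have cl: "\<bar>a$i - b$i\<bar> < 2 * \<delta>" using cube_close[OF a b] .
  have ab: "\<mu>' \<le> a$i" "a$i \<le> 1 - \<mu>'" "\<mu>' \<le> b$i" "b$i \<le> 1 - \<mu>'" using cubeD[OF a] cubeD[OF b] by auto
  from nm consider "NM a j w" | "NM b j w" unfolding NMab_def by blast
  then have w01: "0 \<le> w \<and> w \<le> 1" by cases (use NM_facts in auto)
  then show "0 \<le> w" "w \<le> 1" by auto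
  show "-1 + \<mu>' \<le> w - a$i" "w - a$i \<le> 1 - \<mu>'" "-1 + \<mu>' \<le> w - b$i" "w - b$i \<le> 1 - \<mu>'"
    using w01 ab by auto
  show "idx_pos i < j \<Longrightarrow> 3*\<mu>/4 \<le> w - a$i \<and> 3*\<mu>/4 \<le> w - b$i"
  proof -
    assume p: "idx_pos i < j"
    from nm consider "NM a j w" | "NM b j w" unfolding NMab_def by blast
    then show ?thesis
    proof cases
      case 1 then show ?thesis using NM_facts(7)[OF 1 p] cl cst by (auto simp: abs_less_iff)
    next
      case 2 then show ?thesis using NM_facts(7)[OF 2 p] cl cst by (auto simp: abs_less_iff)
    qed
  qed
  show "j \<le> idx_pos i \<Longrightarrow> w - a$i \<le> -3*\<mu>/4 \<and> w - b$i \<le> -3*\<mu>/4"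
  proof -
    assume p: "j \<le> idx_pos i"
    from nm consider "NM a j w" | "NM b j w" unfolding NMab_def by blast
    then show ?thesis
    proof cases
      case 1 then show ?thesis using NM_facts(8)[OF 1 p] cl cst by (auto simp: abs_less_iff)
    next
      case 2 then show ?thesis using NM_facts(8)[OF 2 p] cl cst by (auto simp: abs_less_iff)
    qed
  qed
qed

lemma NMab_order:
  assumes a: "a \<in> cube y0 \<delta>" and b: "b \<in> cube y0 \<delta>" and m: "m < CARD('n)"
    and w: "NMab a b m w" and w': "NMab a b (Suc m) w'"
  shows "w \<le> w'"
proof -
  define k :: 'n where "k = idx_of (Suc m)"
  have pk: "idx_pos k = m" unfolding k_def using idx_pos_of[where 'n='n, of "Suc m"] m by auto
  have "w - a$k \<le> -3*\<mu>/4" using NMab_side(2)[OF a b w, of k] pk by auto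
  moreover have "3*\<mu>/4 \<le> w' - a$k" using NMab_side(1)[OF a b w', of k] pk by auto
  ultimately show ?thesis using cst by linarith
qed

lemma TF1:
  assumes a: "a \<in> cube y0 \<delta>" and b: "b \<in> cube y0 \<delta>" and m: "m < CARD('n)"
    and w: "NMab a b m w" and w': "NMab a b (Suc m) w'" and mi: "m \<noteq> idx_pos i"
  shows "T a b i w' \<le> T a b i w"
proof (cases "a$i = b$i")
  case True then show ?thesis unfolding T_def sl_def by simp
next
  case False
  have ww: "w \<le> w'" by (rule NMab_order[OF a b m w w'])
  define h where "h = a$i - b$i"
  have h: "h \<noteq> 0" using False unfolding h_def by simp
  have e: "w - b$i = (w - a$i) + h" "w' - b$i = (w' - a$i) + h" unfolding h_def by auto
  show ?thesis
  proof (cases "m < idx_pos i")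
    case True
    then have s1: "w - a$i \<le> -3*\<mu>/4 \<and> w - b$i \<le> -3*\<mu>/4" "w' - a$i \<le> -3*\<mu>/4 \<and> w' - b$i \<le> -3*\<mu>/4"
      using NMab_side(2)[OF a b w, of i] NMab_side(2)[OF a b w', of i] by auto
    have s2: "-1 + \<mu>' \<le> w - a$i" "-1 + \<mu>' \<le> w - b$i" "-1 + \<mu>' \<le> w' - a$i" "-1 + \<mu>' \<le> w' - b$i"
      using NMab_side(3,5)[OF a b w, of i] NMab_side(3,5)[OF a b w', of i] by auto
    have "sl (kr i) (w - a$i) ((w - a$i) + h) \<ge> sl (kr i) (w' - a$i) ((w' - a$i) + h)"
      by (rule shift_mono[OF kr_cn]) (use ww h s1 s2 e cst in auto)
    then show ?thesis unfolding T_def e by simp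
  next
    case False
    then have lt: "idx_pos i < m" using mi by simp
    then have s1: "3*\<mu>/4 \<le> w - a$i \<and> 3*\<mu>/4 \<le> w - b$i" "3*\<mu>/4 \<le> w' - a$i \<and> 3*\<mu>/4 \<le> w' - b$i"
      using NMab_side(1)[OF a b w, of i] NMab_side(1)[OF a b w', of i] by auto
    have s2: "w - a$i \<le> 1 - \<mu>'" "w - b$i \<le> 1 - \<mu>'" "w' - a$i \<le> 1 - \<mu>'" "w' - b$i \<le> 1 - \<mu>'"
      using NMab_side(4,6)[OF a b w, of i] NMab_side(4,6)[OF a b w', of i] by auto
    have "sl (kr i) (w - a$i) ((w - a$i) + h) \<ge> sl (kr i) (w' - a$i) ((w' - a$i) + h)"
      by (rule shift_mono[OF kr_cp]) (use ww h s1 s2 e cst in auto)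
    then show ?thesis unfolding T_def e by simp
  qed
qed

lemma eps_exists: "\<exists>\<epsilon>>0. \<forall>i p q h. h \<noteq> 0 \<longrightarrow> \<bar>h\<bar> \<le> \<mu>/4 \<longrightarrow> p \<le> -\<mu>/2 \<longrightarrow> p + h \<le> -\<mu>/2 \<longrightarrow>
      \<mu>/2 \<le> q \<longrightarrow> \<mu>/2 \<le> q + h \<longrightarrow> q < 1 \<longrightarrow> q + h < 1 \<longrightarrow> q - p \<le> 1 - \<mu> \<longrightarrow>
      sl (kr i) q (q + h) \<ge> sl (kr i) p (p + h) + \<epsilon>"
proof -
  have "\<exists>\<epsilon>>0. \<forall>i\<in>UNIV. \<forall>p q h. h \<noteq> 0 \<longrightarrow> \<bar>h\<bar> \<le> \<mu>/4 \<longrightarrow> p \<le> -\<mu>/2 \<longrightarrow> p + h \<le> -\<mu>/2 \<longrightarrow>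
      \<mu>/2 \<le> q \<longrightarrow> \<mu>/2 \<le> q + h \<longrightarrow> q < 1 \<longrightarrow> q + h < 1 \<longrightarrow> q - p \<le> 1 - \<mu> \<longrightarrow>
      sl (kr i) q (q + h) \<ge> sl (kr i) p (p + h) + \<epsilon>"
  proof (rule pos_min_finite)
    fix i :: 'n
    show "\<exists>\<epsilon>>0. \<forall>p q h. h \<noteq> 0 \<longrightarrow> \<bar>h\<bar> \<le> \<mu>/4 \<longrightarrow> p \<le> -\<mu>/2 \<longrightarrow> p + h \<le> -\<mu>/2 \<longrightarrow>
      \<mu>/2 \<le> q \<longrightarrow> \<mu>/2 \<le> q + h \<longrightarrow> q < 1 \<longrightarrow> q + h < 1 \<longrightarrow> q - p \<le> 1 - \<mu> \<longrightarrow>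
      sl (kr i) q (q + h) \<ge> sl (kr i) p (p + h) + \<epsilon>"
      by (rule column_gap[OF kr_cn kr_cp kr_scn kr_pm]) (use cst in auto)
  next
    fix i :: 'n and d d' :: real
    assume A: "\<forall>p q h. h \<noteq> 0 \<longrightarrow> \<bar>h\<bar> \<le> \<mu>/4 \<longrightarrow> p \<le> -\<mu>/2 \<longrightarrow> p + h \<le> -\<mu>/2 \<longrightarrow>
      \<mu>/2 \<le> q \<longrightarrow> \<mu>/2 \<le> q + h \<longrightarrow> q < 1 \<longrightarrow> q + h < 1 \<longrightarrow> q - p \<le> 1 - \<mu> \<longrightarrow>
      sl (kr i) q (q + h) \<ge> sl (kr i) p (p + h) + d" and "0 < d'" "d' \<le> d"
    then show "\<forall>p q h. h \<noteq> 0 \<longrightarrow> \<bar>h\<bar> \<le> \<mu>/4 \<longrightarrow> p \<le> -\<mu>/2 \<longrightarrow> p + h \<le> -\<mu>/2 \<longrightarrow>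
      \<mu>/2 \<le> q \<longrightarrow> \<mu>/2 \<le> q + h \<longrightarrow> q < 1 \<longrightarrow> q + h < 1 \<longrightarrow> q - p \<le> 1 - \<mu> \<longrightarrow>
      sl (kr i) q (q + h) \<ge> sl (kr i) p (p + h) + d'"
      by (smt (verit))
  qed auto
  then show ?thesis by blast
qed

definition eps :: real where
  "eps = (SOME \<epsilon>. \<epsilon> > 0 \<and> (\<forall>i p q h. h \<noteq> 0 \<longrightarrow> \<bar>h\<bar> \<le> \<mu>/4 \<longrightarrow> p \<le> -\<mu>/2 \<longrightarrow> p + h \<le> -\<mu>/2 \<longrightarrow>
      \<mu>/2 \<le> q \<longrightarrow> \<mu>/2 \<le> q + h \<longrightarrow> q < 1 \<longrightarrow> q + h < 1 \<longrightarrow> q - p \<le> 1 - \<mu> \<longrightarrow>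
      sl (kr i) q (q + h) \<ge> sl (kr i) p (p + h) + \<epsilon>))"

lemma eps: "eps > 0" "\<And>i p q h. h \<noteq> 0 \<Longrightarrow> \<bar>h\<bar> \<le> \<mu>/4 \<Longrightarrow> p \<le> -\<mu>/2 \<Longrightarrow> p + h \<le> -\<mu>/2 \<Longrightarrow>
      \<mu>/2 \<le> q \<Longrightarrow> \<mu>/2 \<le> q + h \<Longrightarrow> q < 1 \<Longrightarrow> q + h < 1 \<Longrightarrow> q - p \<le> 1 - \<mu> \<Longrightarrow>
      sl (kr i) q (q + h) \<ge> sl (kr i) p (p + h) + eps"
proof -
  note * = someI_ex[OF eps_exists, folded eps_def]
  show "eps > 0" using * by blast
  fix i p q h assume "h \<noteq> 0" "\<bar>h\<bar> \<le> \<mu>/4" "p \<le> -\<mu>/2" "p + h \<le> -\<mu>/2" "\<mu>/2 \<le> q" "\<mu>/2 \<le> q + h"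
    "q < 1" "q + h < 1" "q - p \<le> 1 - \<mu>"
  then show "sl (kr i) q (q + h) \<ge> sl (kr i) p (p + h) + eps" using * by blast
qed

lemma MT_exists: "\<exists>M\<ge>0. \<forall>i u v. ((-1 + \<mu>' \<le> u \<and> u \<le> -\<mu>/2 \<and> -1 + \<mu>' \<le> v \<and> v \<le> -\<mu>/2) \<or>
      (\<mu>/2 \<le> u \<and> u \<le> 1 - \<mu>' \<and> \<mu>/2 \<le> v \<and> v \<le> 1 - \<mu>')) \<longrightarrow> \<bar>sl (kr i) u v\<bar> \<le> M"
proof -
  have "\<exists>M. \<forall>u v. -1 + \<mu>' \<le> u \<longrightarrow> u \<le> -\<mu>/2 \<longrightarrow> -1 + \<mu>' \<le> v \<longrightarrow> v \<le> -\<mu>/2 \<longrightarrow> \<bar>sl (kr i) u v\<bar> \<le> M" for i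
    by (rule slope_bound[OF kr_cn]) (use cst in auto)
  then obtain M1 where M1: "\<And>i u v. -1 + \<mu>' \<le> u \<Longrightarrow> u \<le> -\<mu>/2 \<Longrightarrow> -1 + \<mu>' \<le> v \<Longrightarrow> v \<le> -\<mu>/2 \<Longrightarrow> \<bar>sl (kr i) u v\<bar> \<le> M1 i"
    by metis
  have "\<exists>M. \<forall>u v. \<mu>/2 \<le> u \<longrightarrow> u \<le> 1 - \<mu>' \<longrightarrow> \<mu>/2 \<le> v \<longrightarrow> v \<le> 1 - \<mu>' \<longrightarrow> \<bar>sl (kr i) u v\<bar> \<le> M" for i
    by (rule slope_bound[OF kr_cp]) (use cst in auto)
  then obtain M2 where M2: "\<And>i u v. \<mu>/2 \<le> u \<Longrightarrow> u \<le> 1 - \<mu>' \<Longrightarrow> \<mu>/2 \<le> v \<Longrightarrow> v \<le> 1 - \<mu>' \<Longrightarrow> \<bar>sl (kr i) u v\<bar> \<le> M2 i"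
    by metis
  define M where "M = (\<Sum>i\<in>UNIV. \<bar>M1 i\<bar> + \<bar>M2 i\<bar>)"
  have le: "\<bar>M1 i\<bar> + \<bar>M2 i\<bar> \<le> M" for i unfolding M_def by (rule member_le_sum) auto
  show ?thesis
  proof (intro exI[of _ M] conjI allI impI)
    show "M \<ge> 0" unfolding M_def by (intro sum_nonneg) auto
    fix i u v assume "(-1 + \<mu>' \<le> u \<and> u \<le> -\<mu>/2 \<and> -1 + \<mu>' \<le> v \<and> v \<le> -\<mu>/2) \<or>
      (\<mu>/2 \<le> u \<and> u \<le> 1 - \<mu>' \<and> \<mu>/2 \<le> v \<and> v \<le> 1 - \<mu>')"
    then show "\<bar>sl (kr i) u v\<bar> \<le> M"
    proof
      assume "-1 + \<mu>' \<le> u \<and> u \<le> -\<mu>/2 \<and> -1 + \<mu>' \<le> v \<and> v \<le> -\<mu>/2"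
      then show ?thesis using M1[of u v i] le[of i] by auto
    next
      assume "\<mu>/2 \<le> u \<and> u \<le> 1 - \<mu>' \<and> \<mu>/2 \<le> v \<and> v \<le> 1 - \<mu>'"
      then show ?thesis using M2[of u v i] le[of i] by auto
    qed
  qed
qed

definition MT :: real where
  "MT = (SOME M. M \<ge> 0 \<and> (\<forall>i u v. ((-1 + \<mu>' \<le> u \<and> u \<le> -\<mu>/2 \<and> -1 + \<mu>' \<le> v \<and> v \<le> -\<mu>/2) \<or>
      (\<mu>/2 \<le> u \<and> u \<le> 1 - \<mu>' \<and> \<mu>/2 \<le> v \<and> v \<le> 1 - \<mu>')) \<longrightarrow> \<bar>sl (kr i) u v\<bar> \<le> M))"

lemma MT: "MT \<ge> 0" "\<And>i u v. ((-1 + \<mu>' \<le> u \<and> u \<le> -\<mu>/2 \<and> -1 + \<mu>' \<le> v \<and> v \<le> -\<mu>/2) \<or>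
      (\<mu>/2 \<le> u \<and> u \<le> 1 - \<mu>' \<and> \<mu>/2 \<le> v \<and> v \<le> 1 - \<mu>')) \<Longrightarrow> \<bar>sl (kr i) u v\<bar> \<le> MT"
proof -
  note * = someI_ex[OF MT_exists, folded MT_def]
  show "MT \<ge> 0" using * by blast
  fix i u v assume "((-1 + \<mu>' \<le> u \<and> u \<le> -\<mu>/2 \<and> -1 + \<mu>' \<le> v \<and> v \<le> -\<mu>/2) \<or>
      (\<mu>/2 \<le> u \<and> u \<le> 1 - \<mu>' \<and> \<mu>/2 \<le> v \<and> v \<le> 1 - \<mu>'))"
  then show "\<bar>sl (kr i) u v\<bar> \<le> MT" using * by blast
qed

lemma TB:
  assumes a: "a \<in> cube y0 \<delta>" and b: "b \<in> cube y0 \<delta>" and w: "NMab a b j w"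
  shows "\<bar>T a b i w\<bar> \<le> MT"
  unfolding T_def
proof (rule MT(2))
  show "(-1 + \<mu>' \<le> w - a$i \<and> w - a$i \<le> -\<mu>/2 \<and> -1 + \<mu>' \<le> w - b$i \<and> w - b$i \<le> -\<mu>/2) \<or>
      (\<mu>/2 \<le> w - a$i \<and> w - a$i \<le> 1 - \<mu>' \<and> \<mu>/2 \<le> w - b$i \<and> w - b$i \<le> 1 - \<mu>')"
  proof (cases "idx_pos i < j")
    case True then show ?thesis using NMab_side(1)[OF a b w, of i] NMab_side(2)[OF a b w, of i] NMab_side(3-6)[OF a b w, of i] cst by auto
  next
    case False then show ?thesis using NMab_side(1)[OF a b w, of i] NMab_side(2)[OF a b w, of i] NMab_side(3-6)[OF a b w, of i] cst by auto
  qed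
qed

lemma TF2:
  assumes a: "a \<in> cube y0 \<delta>" and b: "b \<in> cube y0 \<delta>"
    and w0: "NMab a b 0 w0" and wn: "NMab a b CARD('n) wn" and ne: "a$i \<noteq> b$i"
  shows "T a b i wn \<ge> T a b i w0 + eps"
proof -
  define h where "h = a$i - b$i"
  define p where "p = w0 - a$i"
  define q where "q = wn - a$i"
  have cl: "\<bar>a$i - b$i\<bar> < 2 * \<delta>" using cube_close[OF a b] .
  have e: "w0 - b$i = p + h" "wn - b$i = q + h" unfolding h_def p_def q_def by auto
  have s0: "p \<le> -3*\<mu>/4" "p + h \<le> -3*\<mu>/4" using NMab_side(2)[OF a b w0, of i] e unfolding p_def by auto
  have sn: "3*\<mu>/4 \<le> q" "3*\<mu>/4 \<le> q + h" using NMab_side(1)[OF a b wn, of i] idx_pos_lt e unfolding q_def by auto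
  have sn1: "q < 1" "q + h < 1" using NMab_side(4,6)[OF a b wn, of i] e cst unfolding q_def by auto
  have qp: "q - p \<le> 1 - \<mu>"
  proof -
    have w01: "0 \<le> w0" "wn \<le> 1" using NMab_side(7)[OF a b w0] NMab_side(8)[OF a b wn] by auto
    have d: "\<mu> \<le> w0 \<or> wn \<le> 1 - \<mu>"
      using bside
    proof
      assume H: "\<forall>x\<in>cube y0 \<delta>. \<forall>j\<le>CARD('n). \<forall>t\<in>{ypt x j..ypt x (Suc j)}. ereal (mr j x - 1) < F x t \<longrightarrow> \<mu> \<le> t"
      from w0 have "\<mu> \<le> w0" unfolding NMab_def NM_def using H by blast
      then show ?thesis by simp
    next
      assume H: "\<forall>x\<in>cube y0 \<delta>. \<forall>j\<le>CARD('n). \<forall>t\<in>{ypt x j..ypt x (Suc j)}. ereal (mr j x - 1) < F x t \<longrightarrow> t \<le> 1 - \<mu>"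
      from wn have "wn \<le> 1 - \<mu>" unfolding NMab_def NM_def using H by blast
      then show ?thesis by simp
    qed
    then show ?thesis using w01 unfolding p_def q_def by auto
  qed
  have "sl (kr i) q (q + h) \<ge> sl (kr i) p (p + h) + eps"
    by (rule eps(2)) (use ne cl cst s0 sn sn1 qp in \<open>auto simp: h_def\<close>)
  then show ?thesis unfolding T_def e p_def[symmetric] q_def[symmetric] by simp
qed

end


lemma abel:
  fixes c X :: "nat \<Rightarrow> real"
  shows "(\<Sum>m<n. c (Suc m) * (X (Suc m) - X m)) = (\<Sum>j\<le>n. (c j - c (Suc j)) * X j) - c 0 * X 0 + c (Suc n) * X n"
proof (induction n)
  case 0 then show ?case by (simp add: algebra_simps)
next
  case (Suc n)
  show ?case using Suc by (simp add: algebra_simps)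
qed

lemma sum_lemma:
  fixes coef d :: "nat \<Rightarrow> real"
  assumes p: "p < n" and A: "coef p = A" and cb: "\<And>m. m < n \<Longrightarrow> \<bar>coef m\<bar> \<le> A"
    and dn: "\<And>m. m < n \<Longrightarrow> m \<noteq> p \<Longrightarrow> d m \<le> 0"
  shows "(\<Sum>m<n. coef m * d m) \<ge> A * (\<Sum>m<n. d m)"
proof -
  have "(\<Sum>m<n. (coef m - A) * d m) \<ge> 0"
  proof (rule sum_nonneg)
    fix m assume "m \<in> {..<n}"
    then have m: "m < n" by simp
    show "(coef m - A) * d m \<ge> 0"
    proof (cases "m = p")
      case True then show ?thesis using A by simp
    next
      case False
      have "coef m - A \<le> 0" using cb[OF m] by (simp add: abs_le_iff)
      moreover have "d m \<le> 0" using dn[OF m False] .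
      ultimately show ?thesis by (simp add: mult_nonpos_nonpos)
    qed
  qed
  moreover have "(\<Sum>m<n. (coef m - A) * d m) = (\<Sum>m<n. coef m * d m) - A * (\<Sum>m<n. d m)"
    by (simp add: algebra_simps sum_subtractf sum_distrib_left)
  ultimately show ?thesis by simp
qed

lemma Phi_nth: "Phi J K x $ i = real_of_ereal (mfun J K (Suc (idx_pos i)) x) - real_of_ereal (mfun J K (idx_pos i) x)"
  unfolding Phi_def by simp

context LS2
begin

lemma key:
  assumes a: "a \<in> cube y0 \<delta>" and b: "b \<in> cube y0 \<delta>" and tau: "\<And>i. \<bar>\<tau> i\<bar> \<le> 1"
    and eta: "0 < \<eta>" "\<eta> \<le> 1"
  shows "\<exists>w. (\<forall>j\<le>CARD('n). NMab a b j (w j)) \<and>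
    (\<Sum>m<CARD('n). \<tau> (idx_of (Suc m)) * (G a b (w (Suc m)) - G a b (w m))) - 2 * (real CARD('n) + 1) * \<eta>
      \<le> (\<Sum>i\<in>UNIV. \<tau> i * (Phi J K b $ i - Phi J K a $ i))"
proof -
  let ?n = "CARD('n)"
  define cc where "cc j = (if 1 \<le> j \<and> j \<le> ?n then \<tau> (idx_of j) else 0)" for j
  define \<Delta> where "\<Delta> j = mr j b - mr j a" for j
  define e where "e j = cc j - cc (Suc j)" for j
  have ccb: "\<bar>cc j\<bar> \<le> 1" for j unfolding cc_def using tau by auto
  have eb: "\<bar>e j\<bar> \<le> 2" for j unfolding e_def using ccb[of j] ccb[of "Suc j"] by (auto simp: abs_le_iff)
  have "\<exists>w. NMab a b j w \<and> e j * \<Delta> j \<ge> e j * G a b w - 2 * \<eta>" if j: "j \<le> ?n" for j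
  proof (cases "e j \<ge> 0")
    case True
    obtain w where w: "NM a j w" "F a w > ereal (mr j a - \<eta>)" using NM_exists[OF a j eta] by blast
    have "\<Delta> j > G a b w - \<eta>" unfolding \<Delta>_def by (rule delta_lower[OF w b])
    then have "e j * \<Delta> j \<ge> e j * (G a b w - \<eta>)" using True by (intro mult_left_mono) auto
    moreover have "e j * \<eta> \<le> 2 * \<eta>" using eb[of j] eta by (intro mult_right_mono) auto
    ultimately show ?thesis using w unfolding NMab_def by (intro exI[of _ w]) (auto simp: algebra_simps)
  next
    case False
    obtain w where w: "NM b j w" "F b w > ereal (mr j b - \<eta>)" using NM_exists[OF b j eta] by blast
    have "\<Delta> j < G a b w + \<eta>" unfolding \<Delta>_def by (rule delta_upper[OF w a])
    then have "e j * \<Delta> j \<ge> e j * (G a b w + \<eta>)" using False by (intro mult_left_mono_neg) auto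
    moreover have "- e j * \<eta> \<le> 2 * \<eta>" using eb[of j] eta by (intro mult_right_mono) auto
    ultimately show ?thesis using w unfolding NMab_def by (intro exI[of _ w]) (auto simp: algebra_simps)
  qed
  then have "\<forall>j\<in>{..?n}. \<exists>w. NMab a b j w \<and> e j * \<Delta> j \<ge> e j * G a b w - 2 * \<eta>" by auto
  then obtain w where w: "\<And>j. j \<le> ?n \<Longrightarrow> NMab a b j (w j) \<and> e j * \<Delta> j \<ge> e j * G a b (w j) - 2 * \<eta>"
    by (metis atMost_iff bchoice)
  have cc0: "cc 0 = 0" and ccn: "cc (Suc ?n) = 0" unfolding cc_def by auto
  have ccm: "cc (Suc m) = \<tau> (idx_of (Suc m))" if "m < ?n" for m using that unfolding cc_def by auto
  have lhs: "(\<Sum>i\<in>UNIV. \<tau> i * (Phi J K b $ i - Phi J K a $ i)) = (\<Sum>j\<le>?n. e j * \<Delta> j)"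
  proof -
    have "(\<Sum>i\<in>UNIV. \<tau> i * (Phi J K b $ i - Phi J K a $ i)) =
          (\<Sum>i\<in>(UNIV::'n set). (\<lambda>m. \<tau> (idx_of (Suc m)) * (\<Delta> (Suc m) - \<Delta> m)) (idx_pos i))"
    proof (rule sum.cong[OF refl])
      fix i :: 'n
      have "idx_of (Suc (idx_pos i)) = i" using idx_of_pos[of i] by simp
      then show "\<tau> i * (Phi J K b $ i - Phi J K a $ i) = (\<lambda>m. \<tau> (idx_of (Suc m)) * (\<Delta> (Suc m) - \<Delta> m)) (idx_pos i)"
        unfolding Phi_nth \<Delta>_def by (simp add: algebra_simps)
    qed
    also have "\<dots> = (\<Sum>m<?n. \<tau> (idx_of (Suc m)) * (\<Delta> (Suc m) - \<Delta> m))" by (rule sum_idx_pos)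
    also have "\<dots> = (\<Sum>m<?n. cc (Suc m) * (\<Delta> (Suc m) - \<Delta> m))" by (rule sum.cong) (auto simp: ccm)
    also have "\<dots> = (\<Sum>j\<le>?n. e j * \<Delta> j)"
      using abel[of cc \<Delta> ?n] cc0 ccn unfolding e_def by simp
    finally show ?thesis .
  qed
  have rhs: "(\<Sum>m<?n. \<tau> (idx_of (Suc m)) * (G a b (w (Suc m)) - G a b (w m))) = (\<Sum>j\<le>?n. e j * G a b (w j))"
  proof -
    have "(\<Sum>m<?n. \<tau> (idx_of (Suc m)) * (G a b (w (Suc m)) - G a b (w m))) =
          (\<Sum>m<?n. cc (Suc m) * ((\<lambda>j. G a b (w j)) (Suc m) - (\<lambda>j. G a b (w j)) m))"
      by (rule sum.cong) (auto simp: ccm)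
    also have "\<dots> = (\<Sum>j\<le>?n. e j * G a b (w j))"
      using abel[of cc "\<lambda>j. G a b (w j)" ?n] cc0 ccn unfolding e_def by simp
    finally show ?thesis .
  qed
  have "(\<Sum>j\<le>?n. e j * G a b (w j) - 2 * \<eta>) \<le> (\<Sum>j\<le>?n. e j * \<Delta> j)"
    by (rule sum_mono) (use w in auto)
  moreover have "(\<Sum>j\<le>?n. e j * G a b (w j) - 2 * \<eta>) = (\<Sum>j\<le>?n. e j * G a b (w j)) - 2 * (real ?n + 1) * \<eta>"
    by (simp add: sum_subtractf algebra_simps)
  ultimately show ?thesis using lhs rhs w by (intro exI[of _ w]) auto
qed

end


lemma eta_limit:
  fixes A B C :: real
  assumes C: "C \<ge> 0" and h: "\<And>\<eta>. 0 < \<eta> \<Longrightarrow> \<eta> \<le> 1 \<Longrightarrow> A - C * \<eta> \<le> B"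
  shows "A \<le> B"
proof (rule ccontr)
  assume "\<not> A \<le> B"
  then have g: "A - B > 0" by simp
  define \<eta> where "\<eta> = min 1 ((A - B) / (2 * (C + 1)))"
  have e: "0 < \<eta>" "\<eta> \<le> 1" using g C unfolding \<eta>_def by auto
  have "C * \<eta> \<le> (C + 1) * ((A - B) / (2 * (C + 1)))"
    using C e g unfolding \<eta>_def by (intro mult_mono) auto
  also have "\<dots> = (A - B) / 2" using C by (simp add: field_simps)
  finally have c1: "C * \<eta> \<le> (A - B) / 2" .
  have c2: "A - B \<le> C * \<eta>" using h[OF e] by linarith
  show False using c1 c2 g by argo
qed

context LS2
begin

lemma G_diff: "G a b w' - G a b w = (\<Sum>i\<in>UNIV. (a$i - b$i) * (T a b i w' - T a b i w))"
  unfolding G_T by (simp add: sum_subtractf[symmetric] algebra_simps)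

lemma lower_bound:
  assumes a: "a \<in> cube y0 \<delta>" and b: "b \<in> cube y0 \<delta>"
  shows "eps * (\<Sum>i\<in>UNIV. \<bar>b$i - a$i\<bar>) \<le> (\<Sum>i\<in>UNIV. \<bar>Phi J K b $ i - Phi J K a $ i\<bar>)"
proof (rule eta_limit[of "2 * (real CARD('n) + 1)"])
  fix \<eta> :: real assume eta: "0 < \<eta>" "\<eta> \<le> 1"
  let ?n = "CARD('n)"
  define \<tau> where "\<tau> i = - sgn (b$i - a$i)" for i
  have tau: "\<bar>\<tau> i\<bar> \<le> 1" for i unfolding \<tau>_def by (simp add: sgn_if)
  obtain w where w: "\<And>j. j \<le> ?n \<Longrightarrow> NMab a b j (w j)"
    and ineq: "(\<Sum>m<?n. \<tau> (idx_of (Suc m)) * (G a b (w (Suc m)) - G a b (w m))) - 2 * (real ?n + 1) * \<eta>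
      \<le> (\<Sum>i\<in>UNIV. \<tau> i * (Phi J K b $ i - Phi J K a $ i))"
    using key[OF a b, of \<tau> \<eta>, OF tau eta] by (elim exE conjE) auto
  define dl where "dl i m = T a b i (w (Suc m)) - T a b i (w m)" for i m
  have main: "(\<Sum>m<?n. \<tau> (idx_of (Suc m)) * (G a b (w (Suc m)) - G a b (w m))) =
      (\<Sum>i\<in>UNIV. \<Sum>m<?n. (\<tau> (idx_of (Suc m)) * (a$i - b$i)) * dl i m)"
  proof -
    have "(\<Sum>m<?n. \<tau> (idx_of (Suc m)) * (G a b (w (Suc m)) - G a b (w m))) =
      (\<Sum>m<?n. \<Sum>i\<in>UNIV. \<tau> (idx_of (Suc m)) * ((a$i - b$i) * dl i m))"
      unfolding G_diff dl_def by (simp add: sum_distrib_left)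
    also have "\<dots> = (\<Sum>i\<in>UNIV. \<Sum>m<?n. \<tau> (idx_of (Suc m)) * ((a$i - b$i) * dl i m))"
      by (rule sum.swap)
    also have "\<dots> = (\<Sum>i\<in>UNIV. \<Sum>m<?n. (\<tau> (idx_of (Suc m)) * (a$i - b$i)) * dl i m)"
      by (simp add: mult.assoc)
    finally show ?thesis .
  qed
  have per_i: "eps * \<bar>b$i - a$i\<bar> \<le> (\<Sum>m<?n. (\<tau> (idx_of (Suc m)) * (a$i - b$i)) * dl i m)" for i
  proof -
    have p: "idx_pos i < ?n" by (rule idx_pos_lt)
    have cp: "\<tau> (idx_of (Suc (idx_pos i))) * (a$i - b$i) = \<bar>b$i - a$i\<bar>"
      using idx_of_pos[of i] unfolding \<tau>_def by (auto simp: sgn_if)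
    have cb: "\<bar>\<tau> (idx_of (Suc m)) * (a$i - b$i)\<bar> \<le> \<bar>b$i - a$i\<bar>" for m
    proof -
      have "\<bar>\<tau> (idx_of (Suc m))\<bar> * \<bar>b$i - a$i\<bar> \<le> \<bar>b$i - a$i\<bar>"
        by (rule mult_left_le_one_le) (use tau in auto)
      then show ?thesis by (simp add: abs_mult abs_minus_commute)
    qed
    have dn: "dl i m \<le> 0" if "m < ?n" "m \<noteq> idx_pos i" for m
      unfolding dl_def using TF1[OF a b that(1) w w that(2)] that by auto
    have "(\<Sum>m<?n. (\<tau> (idx_of (Suc m)) * (a$i - b$i)) * dl i m) \<ge> \<bar>b$i - a$i\<bar> * (\<Sum>m<?n. dl i m)"
      by (rule sum_lemma[where coef = "\<lambda>m. \<tau> (idx_of (Suc m)) * (a$i - b$i)" and d = "dl i", OF p cp])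
         (use cb dn in auto)
    moreover have "(\<Sum>m<?n. dl i m) = T a b i (w ?n) - T a b i (w 0)"
      unfolding dl_def by (rule sum_lessThan_telescope)
    moreover have "\<bar>b$i - a$i\<bar> * eps \<le> \<bar>b$i - a$i\<bar> * (T a b i (w ?n) - T a b i (w 0))"
    proof (cases "a$i = b$i")
      case False
      have "T a b i (w ?n) \<ge> T a b i (w 0) + eps" by (rule TF2[OF a b w w False]) auto
      then show ?thesis by (intro mult_left_mono) auto
    qed simp
    ultimately show ?thesis by (simp add: mult.commute)
  qed
  have "eps * (\<Sum>i\<in>UNIV. \<bar>b$i - a$i\<bar>) \<le> (\<Sum>m<?n. \<tau> (idx_of (Suc m)) * (G a b (w (Suc m)) - G a b (w m)))"
    unfolding main sum_distrib_left by (rule sum_mono) (rule per_i)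
  moreover have "(\<Sum>i\<in>UNIV. \<tau> i * (Phi J K b $ i - Phi J K a $ i)) \<le> (\<Sum>i\<in>UNIV. \<bar>Phi J K b $ i - Phi J K a $ i\<bar>)"
  proof (rule sum_mono)
    fix i
    have "\<tau> i * (Phi J K b $ i - Phi J K a $ i) \<le> \<bar>\<tau> i * (Phi J K b $ i - Phi J K a $ i)\<bar>" by simp
    also have "\<dots> \<le> \<bar>Phi J K b $ i - Phi J K a $ i\<bar>" using tau[of i] by (simp add: abs_mult mult_left_le_one_le)
    finally show "\<tau> i * (Phi J K b $ i - Phi J K a $ i) \<le> \<bar>Phi J K b $ i - Phi J K a $ i\<bar>" .
  qed
  ultimately show "eps * (\<Sum>i\<in>UNIV. \<bar>b$i - a$i\<bar>) - 2 * (real ?n + 1) * \<eta> \<le> (\<Sum>i\<in>UNIV. \<bar>Phi J K b $ i - Phi J K a $ i\<bar>)"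
    using ineq by linarith
qed simp

end


context LS2
begin

lemma G_bound:
  assumes a: "a \<in> cube y0 \<delta>" and b: "b \<in> cube y0 \<delta>" and w: "NMab a b j w"
  shows "\<bar>G a b w\<bar> \<le> MT * (\<Sum>i\<in>UNIV. \<bar>b$i - a$i\<bar>)"
proof -
  have "\<bar>G a b w\<bar> \<le> (\<Sum>i\<in>UNIV. \<bar>(a$i - b$i) * T a b i w\<bar>)" unfolding G_T by (rule sum_abs)
  also have "\<dots> \<le> (\<Sum>i\<in>UNIV. \<bar>b$i - a$i\<bar> * MT)"
  proof (rule sum_mono)
    fix i
    have "\<bar>T a b i w\<bar> \<le> MT" by (rule TB[OF a b w])
    then show "\<bar>(a$i - b$i) * T a b i w\<bar> \<le> \<bar>b$i - a$i\<bar> * MT"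
      by (simp add: abs_mult abs_minus_commute mult_left_mono)
  qed
  also have "\<dots> = MT * (\<Sum>i\<in>UNIV. \<bar>b$i - a$i\<bar>)" by (simp add: sum_distrib_left mult.commute)
  finally show ?thesis .
qed

lemma delta_bound:
  assumes a: "a \<in> cube y0 \<delta>" and b: "b \<in> cube y0 \<delta>" and j: "j \<le> CARD('n)"
  shows "\<bar>mr j b - mr j a\<bar> \<le> MT * (\<Sum>i\<in>UNIV. \<bar>b$i - a$i\<bar>)"
proof (rule eta_limit[of 1])
  fix \<eta> :: real assume eta: "0 < \<eta>" "\<eta> \<le> 1"
  obtain w where w: "NM a j w" "F a w > ereal (mr j a - \<eta>)" using NM_exists[OF a j eta] by blast
  obtain w' where w': "NM b j w'" "F b w' > ereal (mr j b - \<eta>)" using NM_exists[OF b j eta] by blast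
  have 1: "mr j b - mr j a > G a b w - \<eta>" by (rule delta_lower[OF w b])
  have 2: "mr j b - mr j a < G a b w' + \<eta>" by (rule delta_upper[OF w' a])
  have 3: "\<bar>G a b w\<bar> \<le> MT * (\<Sum>i\<in>UNIV. \<bar>b$i - a$i\<bar>)" by (rule G_bound[OF a b]) (use w in \<open>auto simp: NMab_def\<close>)
  have 4: "\<bar>G a b w'\<bar> \<le> MT * (\<Sum>i\<in>UNIV. \<bar>b$i - a$i\<bar>)" by (rule G_bound[OF a b]) (use w' in \<open>auto simp: NMab_def\<close>)
  show "\<bar>mr j b - mr j a\<bar> - 1 * \<eta> \<le> MT * (\<Sum>i\<in>UNIV. \<bar>b$i - a$i\<bar>)"
    using 1 2 3 4 by (auto simp: abs_le_iff abs_less_iff)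
qed simp

lemma upper_bound:
  assumes a: "a \<in> cube y0 \<delta>" and b: "b \<in> cube y0 \<delta>"
  shows "\<bar>Phi J K b $ k - Phi J K a $ k\<bar> \<le> 2 * MT * (\<Sum>i\<in>UNIV. \<bar>b$i - a$i\<bar>)"
proof -
  have p: "Suc (idx_pos k) \<le> CARD('n)" "idx_pos k \<le> CARD('n)" using idx_pos_lt[of k] by auto
  have "Phi J K b $ k - Phi J K a $ k = (mr (Suc (idx_pos k)) b - mr (Suc (idx_pos k)) a) - (mr (idx_pos k) b - mr (idx_pos k) a)"
    unfolding Phi_nth by simp
  then show ?thesis using delta_bound[OF a b p(1)] delta_bound[OF a b p(2)] by (simp add: abs_le_iff)
qed

lemma sum_indicator_pos:
  fixes X :: "nat \<Rightarrow> real"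
  shows "(\<Sum>m<CARD('n). (if idx_of (Suc m) = (k::'n) then 1 else 0) * X m) = X (idx_pos k)"
proof -
  have "(\<Sum>m<CARD('n). (if idx_of (Suc m) = k then 1 else 0) * X m) = (\<Sum>m<CARD('n). if m = idx_pos k then X m else 0)"
  proof (rule sum.cong[OF refl])
    fix m assume m: "m \<in> {..<CARD('n)}"
    have "idx_of (Suc m) = k \<longleftrightarrow> m = idx_pos k"
    proof
      assume "idx_of (Suc m) = k"
      then have "idx_pos k = idx_pos (idx_of (Suc m) :: 'n)" by simp
      also have "\<dots> = m" using idx_pos_of[where 'n='n, of "Suc m"] m by auto
      finally show "m = idx_pos k" by simp
    next
      assume "m = idx_pos k" then show "idx_of (Suc m) = k" using idx_of_pos[of k] by simp
    qed
    then show "(if idx_of (Suc m) = k then 1 else 0) * X m = (if m = idx_pos k then X m else 0)" by simp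
  qed
  also have "\<dots> = X (idx_pos k)" using idx_pos_lt[of k] by simp
  finally show ?thesis .
qed

lemma axis_step:
  assumes "b = a + h *\<^sub>R axis l (1::real)"
  shows "a$i - b$i = (if i = l then - h else 0)"
  using assms by (simp add: axis_def)

lemma jac_offdiag:
  assumes a: "a \<in> cube y0 \<delta>" and b: "b \<in> cube y0 \<delta>" and bd: "b = a + h *\<^sub>R axis l (1::real)"
    and h: "h > 0" and kl: "k \<noteq> l"
  shows "Phi J K b $ k - Phi J K a $ k \<ge> 0"
proof -
  have "0 \<le> Phi J K b $ k - Phi J K a $ k"
  proof (rule eta_limit[of "2 * (real CARD('n) + 1)"])
    fix \<eta> :: real assume eta: "0 < \<eta>" "\<eta> \<le> 1"
    define \<tau> where "\<tau> i = (if i = k then 1 else (0::real))" for i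
    have tau: "\<bar>\<tau> i\<bar> \<le> 1" for i unfolding \<tau>_def by auto
    obtain w where w: "\<And>j. j \<le> CARD('n) \<Longrightarrow> NMab a b j (w j)"
      and ineq: "(\<Sum>m<CARD('n). \<tau> (idx_of (Suc m)) * (G a b (w (Suc m)) - G a b (w m))) - 2 * (real CARD('n) + 1) * \<eta>
        \<le> (\<Sum>i\<in>UNIV. \<tau> i * (Phi J K b $ i - Phi J K a $ i))"
      using key[OF a b, of \<tau> \<eta>, OF tau eta] by (elim exE conjE) auto
    have lhs: "(\<Sum>i\<in>UNIV. \<tau> i * (Phi J K b $ i - Phi J K a $ i)) = Phi J K b $ k - Phi J K a $ k"
    proof -
      have "(\<Sum>i\<in>UNIV. \<tau> i * (Phi J K b $ i - Phi J K a $ i)) = (\<Sum>i\<in>UNIV. if i = k then Phi J K b $ i - Phi J K a $ i else 0)"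
        by (rule sum.cong) (auto simp: \<tau>_def)
      then show ?thesis by simp
    qed
    have main: "(\<Sum>m<CARD('n). \<tau> (idx_of (Suc m)) * (G a b (w (Suc m)) - G a b (w m))) =
        G a b (w (Suc (idx_pos k))) - G a b (w (idx_pos k))"
      using sum_indicator_pos[of k "\<lambda>m. G a b (w (Suc m)) - G a b (w m)"] unfolding \<tau>_def by simp
    have Gd: "G a b w' - G a b w'' = - h * (T a b l w' - T a b l w'')" for w' w''
    proof -
      have "G a b w' - G a b w'' = (\<Sum>i\<in>UNIV. if i = l then - h * (T a b i w' - T a b i w'') else 0)"
        unfolding G_diff by (rule sum.cong) (auto simp: axis_step[OF bd])
      then show ?thesis by simp
    qed
    have pk: "idx_pos k < CARD('n)" "idx_pos k \<noteq> idx_pos l"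
      using idx_pos_lt[of k] kl idx_of_pos[of k] idx_of_pos[of l] by metis+
    have "T a b l (w (Suc (idx_pos k))) \<le> T a b l (w (idx_pos k))"
      by (rule TF1[OF a b pk(1) w w pk(2)]) (use pk in auto)
    then have "0 \<le> G a b (w (Suc (idx_pos k))) - G a b (w (idx_pos k))"
      unfolding Gd using h by (simp add: mult_nonneg_nonpos)
    then show "0 - 2 * (real CARD('n) + 1) * \<eta> \<le> Phi J K b $ k - Phi J K a $ k"
      using ineq lhs main by linarith
  qed simp
  then show ?thesis by simp
qed

lemma jac_colsum:
  assumes a: "a \<in> cube y0 \<delta>" and b: "b \<in> cube y0 \<delta>" and bd: "b = a + h *\<^sub>R axis l (1::real)"
    and h: "h > 0"
  shows "(\<Sum>k\<in>UNIV. Phi J K b $ k - Phi J K a $ k) \<le> - eps * h"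
proof -
  have "h * eps \<le> - (\<Sum>k\<in>UNIV. Phi J K b $ k - Phi J K a $ k)"
  proof (rule eta_limit[of "2 * (real CARD('n) + 1)"])
    fix \<eta> :: real assume eta: "0 < \<eta>" "\<eta> \<le> 1"
    define \<tau> where "\<tau> i = (-1::real)" for i :: 'n
    have tau: "\<bar>\<tau> i\<bar> \<le> 1" for i unfolding \<tau>_def by auto
    obtain w where w: "\<And>j. j \<le> CARD('n) \<Longrightarrow> NMab a b j (w j)"
      and ineq: "(\<Sum>m<CARD('n). \<tau> (idx_of (Suc m)) * (G a b (w (Suc m)) - G a b (w m))) - 2 * (real CARD('n) + 1) * \<eta>
        \<le> (\<Sum>i\<in>UNIV. \<tau> i * (Phi J K b $ i - Phi J K a $ i))"
      using key[OF a b, of \<tau> \<eta>, OF tau eta] by (elim exE conjE) auto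
    have lhs: "(\<Sum>i\<in>UNIV. \<tau> i * (Phi J K b $ i - Phi J K a $ i)) = - (\<Sum>k\<in>UNIV. Phi J K b $ k - Phi J K a $ k)"
      unfolding \<tau>_def by (simp add: sum_subtractf)
    have "(\<Sum>m<CARD('n). \<tau> (idx_of (Suc m)) * (G a b (w (Suc m)) - G a b (w m))) =
        - (\<Sum>m<CARD('n). G a b (w (Suc m)) - G a b (w m))"
      unfolding \<tau>_def by (simp add: sum_subtractf)
    also have "\<dots> = - (G a b (w CARD('n)) - G a b (w 0))" using sum_lessThan_telescope[of "\<lambda>m. G a b (w m)"] by simp
    finally have main: "(\<Sum>m<CARD('n). \<tau> (idx_of (Suc m)) * (G a b (w (Suc m)) - G a b (w m))) =
        - (G a b (w CARD('n)) - G a b (w 0))" .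
    have Gd: "G a b w' - G a b w'' = - h * (T a b l w' - T a b l w'')" for w' w''
    proof -
      have "G a b w' - G a b w'' = (\<Sum>i\<in>UNIV. if i = l then - h * (T a b i w' - T a b i w'') else 0)"
        unfolding G_diff by (rule sum.cong) (auto simp: axis_step[OF bd])
      then show ?thesis by simp
    qed
    have ne: "a$l \<noteq> b$l" using axis_step[OF bd, of l] h by auto
    have "T a b l (w CARD('n)) \<ge> T a b l (w 0) + eps" by (rule TF2[OF a b w w ne]) auto
    then have "h * eps \<le> h * (T a b l (w CARD('n)) - T a b l (w 0))" using h by (intro mult_left_mono) auto
    then show "h * eps - 2 * (real CARD('n) + 1) * \<eta> \<le> - (\<Sum>k\<in>UNIV. Phi J K b $ k - Phi J K a $ k)"
      using ineq lhs main Gd[of "w CARD('n)" "w 0"] by linarith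
  qed simp
  then show ?thesis by (simp add: algebra_simps)
qed

end


definition Cset :: "real \<Rightarrow> (real^'n^'n) set" where
  "Cset e = {A. (\<forall>k l. k \<noteq> l \<longrightarrow> 0 \<le> A$k$l) \<and> (\<forall>l. (\<Sum>k\<in>UNIV. A$k$l) \<le> - e)}"

lemma Cset_convex: "convex (Cset e)"
  unfolding convex_def Cset_def
proof (intro ballI allI impI CollectI conjI, goal_cases)
  case (1 x y u v k l)
  then show ?case by (auto intro!: add_nonneg_nonneg mult_nonneg_nonneg)
next
  case (2 x y u v l)
  have "(\<Sum>k\<in>UNIV. (u *\<^sub>R x + v *\<^sub>R y) $ k $ l) = u * (\<Sum>k\<in>UNIV. x$k$l) + v * (\<Sum>k\<in>UNIV. y$k$l)"
    by (simp add: sum.distrib sum_distrib_left)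
  also have "\<dots> \<le> u * (- e) + v * (- e)"
    using 2 by (intro add_mono mult_left_mono) auto
  also have "\<dots> = - e"
  proof -
    have "u * (- e) + v * (- e) = - (e * (u + v))" by (simp add: algebra_simps)
    then show ?thesis using 2 by simp
  qed
  finally show ?case .
qed

lemma Cset_closed: "closed (Cset e)"
proof -
  have eq: "Cset e = (\<Inter>p\<in>{p. fst p \<noteq> snd p}. {A::real^'n^'n. 0 \<le> A $ fst p $ snd p}) \<inter>
      (\<Inter>l\<in>UNIV. {A::real^'n^'n. (\<Sum>k\<in>UNIV. A$k$l) \<le> - e})"
    unfolding Cset_def by auto
  have cl1: "closed {A::real^'n^'n. 0 \<le> A $ fst p $ snd p}" for p
    by (rule closed_Collect_le) (intro continuous_intros)+
  have cl2: "closed {A::real^'n^'n. (\<Sum>k\<in>UNIV. A$k$l) \<le> - e}" for l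
    by (rule closed_Collect_le) (intro continuous_intros)+
  have c1: "closed (\<Inter>p\<in>{p. fst p \<noteq> snd p}. {A::real^'n^'n. 0 \<le> A $ fst p $ snd p})"
    by (rule closed_INT) (use cl1 in blast)
  have c2: "closed (\<Inter>l\<in>UNIV. {A::real^'n^'n. (\<Sum>k\<in>UNIV. A$k$l) \<le> - e})"
    by (rule closed_INT) (use cl2 in blast)
  show ?thesis unfolding eq by (rule closed_Int[OF c1 c2])
qed

lemma Cset_rank:
  fixes A :: "real^'n^'n"
  assumes A: "A \<in> Cset e" and e: "e > 0"
  shows "rank A = CARD('n)"
proof -
  have inj: "inj ((*v) A)"
  proof -
    have "v = 0" if Av: "A *v v = 0" for v
    proof -
      define \<sigma> where "\<sigma> k = - sgn (v$k)" for k
      have "0 = (\<Sum>k\<in>UNIV. \<sigma> k * (A *v v) $ k)" using Av by simp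
      also have "\<dots> = (\<Sum>k\<in>UNIV. \<Sum>l\<in>UNIV. v$l * (\<sigma> k * A$k$l))"
        by (simp add: matrix_vector_mult_def sum_distrib_left algebra_simps)
      also have "\<dots> = (\<Sum>l\<in>UNIV. \<Sum>k\<in>UNIV. v$l * (\<sigma> k * A$k$l))"
        by (rule sum.swap)
      also have "\<dots> = (\<Sum>l\<in>UNIV. v$l * (\<Sum>k\<in>UNIV. \<sigma> k * A$k$l))"
        by (simp add: sum_distrib_left)
      also have "\<dots> \<ge> (\<Sum>l\<in>UNIV. e * \<bar>v$l\<bar>)"
      proof (rule sum_mono)
        fix l
        have "v$l * (\<Sum>k\<in>UNIV. \<sigma> k * A$k$l) = (\<Sum>k\<in>UNIV. v$l * \<sigma> k * A$k$l)"
          by (simp add: sum_distrib_left mult.assoc)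
        also have "\<dots> \<ge> (\<Sum>k\<in>UNIV. - \<bar>v$l\<bar> * A$k$l)"
        proof (rule sum_mono)
          fix k
          show "v$l * \<sigma> k * A$k$l \<ge> - \<bar>v$l\<bar> * A$k$l"
          proof (cases "k = l")
            case True then show ?thesis unfolding \<sigma>_def by (simp add: sgn_if)
          next
            case False
            then have nn: "0 \<le> A$k$l" using A unfolding Cset_def by auto
            have "\<bar>v$l * \<sigma> k\<bar> \<le> \<bar>v$l\<bar>" unfolding \<sigma>_def by (simp add: abs_mult sgn_if)
            then have m: "- \<bar>v$l\<bar> \<le> v$l * \<sigma> k" by linarith
            show ?thesis using mult_right_mono[OF m nn] by simp
          qed
        qed
        also have "(\<Sum>k\<in>UNIV. - \<bar>v$l\<bar> * A$k$l) = - \<bar>v$l\<bar> * (\<Sum>k\<in>UNIV. A$k$l)"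
          by (simp add: sum_distrib_left)
        also have "\<dots> \<ge> e * \<bar>v$l\<bar>"
        proof -
          have "(\<Sum>k\<in>UNIV. A$k$l) \<le> - e" using A unfolding Cset_def by auto
          then have "\<bar>v$l\<bar> * (\<Sum>k\<in>UNIV. A$k$l) \<le> \<bar>v$l\<bar> * (- e)" by (intro mult_left_mono) auto
          then show ?thesis by (simp add: algebra_simps)
        qed
        finally show "v$l * (\<Sum>k\<in>UNIV. \<sigma> k * A$k$l) \<ge> e * \<bar>v$l\<bar>" .
      qed
      finally have "(\<Sum>l\<in>UNIV. e * \<bar>v$l\<bar>) \<le> 0" .
      then have "(\<Sum>l\<in>UNIV. \<bar>v$l\<bar>) \<le> 0" using e by (simp add: sum_distrib_left[symmetric] mult_le_0_iff)
      then have "\<forall>l\<in>UNIV. \<bar>v$l\<bar> = 0" by (subst sum_nonneg_eq_0_iff[symmetric]) (auto intro: antisym sum_nonneg)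
      then show "v = 0" by (simp add: vec_eq_iff)
    qed
    then show ?thesis using linear_injective_0[OF matrix_vector_mul_linear[of A]] by auto
  qed
  then show ?thesis by (rule full_rank_injective[THEN iffD2])
qed

lemma open_cube: "open (cube (c::real^'n) d)"
proof -
  have "cube c d = (\<Inter>i\<in>UNIV. {x::real^'n. \<bar>x$i - c$i\<bar> < d})" unfolding cube_def by auto
  moreover have "open {x::real^'n. \<bar>x$i - c$i\<bar> < d}" for i
    by (rule open_Collect_less) (intro continuous_intros)+
  ultimately show ?thesis by auto
qed


context LS2
begin

lemma quot_limit:
  assumes hD: "(Phi J K has_derivative D) (at z)"
  shows "((\<lambda>h. (Phi J K (z + h *\<^sub>R axis l 1) $ k - Phi J K z $ k) / h) \<longlongrightarrow> D (axis l 1) $ k) (at_right 0)"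
proof -
  let ?v = "axis l (1::real) :: real^('n::{finite,linorder})"
  have lin: "linear D" by (rule has_derivative_linear[OF hD])
  have h1: "((\<lambda>h. z + h *\<^sub>R ?v) has_derivative (\<lambda>h. h *\<^sub>R ?v)) (at 0)"
    by (auto intro!: derivative_eq_intros)
  have h2: "(Phi J K has_derivative D) (at ((\<lambda>h. z + h *\<^sub>R ?v) 0))" using hD by simp
  have "((\<lambda>h. Phi J K (z + h *\<^sub>R ?v)) has_derivative (\<lambda>h. D (h *\<^sub>R ?v))) (at 0)"
    using has_derivative_compose[OF h1 h2] by simp
  then have "((\<lambda>h. Phi J K (z + h *\<^sub>R ?v) $ k) has_derivative (\<lambda>h. D (h *\<^sub>R ?v) $ k)) (at 0)"
    by (rule bounded_linear.has_derivative[OF bounded_linear_vec_nth])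
  moreover have "(\<lambda>h. D (h *\<^sub>R ?v) $ k) = (\<lambda>h. (D ?v $ k) * h)"
    using linear_cmul[OF lin] by (auto simp: mult.commute)
  ultimately have "((\<lambda>h. Phi J K (z + h *\<^sub>R ?v) $ k) has_field_derivative (D ?v $ k)) (at 0)"
    by (simp add: has_field_derivative_def)
  then have "((\<lambda>y. (Phi J K (z + y *\<^sub>R ?v) $ k - Phi J K (z + 0 *\<^sub>R ?v) $ k) / (y - 0)) \<longlongrightarrow> D ?v $ k) (at 0)"
    by (simp add: has_field_derivative_iff)
  then have "((\<lambda>h. (Phi J K (z + h *\<^sub>R ?v) $ k - Phi J K z $ k) / h) \<longlongrightarrow> D ?v $ k) (at 0)" by simp
  then show ?thesis by (simp add: filterlim_at_split)
qed

lemma step_in_cube: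
  assumes z: "z \<in> cube y0 \<delta>"
  shows "eventually (\<lambda>h. 0 < h \<and> z + h *\<^sub>R axis l (1::real) \<in> cube y0 \<delta>) (at_right 0)"
  unfolding eventually_at_right_field
proof (intro exI[of _ "\<delta> - \<bar>z$l - y0$l\<bar>"] conjI allI impI)
  show "0 < \<delta> - \<bar>z$l - y0$l\<bar>" using z unfolding cube_def by auto
  fix h :: real assume h: "0 < h" "h < \<delta> - \<bar>z$l - y0$l\<bar>"
  show "0 < h" using h by simp
  show "z + h *\<^sub>R axis l 1 \<in> cube y0 \<delta>" unfolding cube_def
  proof (intro CollectI allI)
    fix i
    show "\<bar>(z + h *\<^sub>R axis l 1) $ i - y0 $ i\<bar> < \<delta>"
    proof (cases "i = l")
      case True then show ?thesis using h by (simp add: axis_def)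
    next
      case False then show ?thesis using z unfolding cube_def by (simp add: axis_def)
    qed
  qed
qed

lemma jac_in_C:
  assumes z: "z \<in> cube y0 \<delta>" and d: "Phi J K differentiable (at z)"
  shows "matrix (frechet_derivative (Phi J K) (at z)) \<in> Cset eps"
proof -
  define D where "D = frechet_derivative (Phi J K) (at z)"
  have hD: "(Phi J K has_derivative D) (at z)" using d frechet_derivative_works D_def by auto
  have mat: "matrix D $ k $ l = D (axis l 1) $ k" for k l by (simp add: matrix_def)
  have off: "0 \<le> D (axis l 1) $ k" if kl: "k \<noteq> l" for k l
  proof (rule tendsto_lowerbound[OF quot_limit[OF hD]])
    show "\<forall>\<^sub>F h in at_right 0. 0 \<le> (Phi J K (z + h *\<^sub>R axis l 1) $ k - Phi J K z $ k) / h"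
      using step_in_cube[OF z, of l]
    proof (rule eventually_mono)
      fix h assume h: "0 < h \<and> z + h *\<^sub>R axis l 1 \<in> cube y0 \<delta>"
      have "Phi J K (z + h *\<^sub>R axis l 1) $ k - Phi J K z $ k \<ge> 0"
        by (rule jac_offdiag[OF z _ refl _ kl]) (use h in auto)
      then show "0 \<le> (Phi J K (z + h *\<^sub>R axis l 1) $ k - Phi J K z $ k) / h" using h by simp
    qed
  qed simp
  have col: "(\<Sum>k\<in>UNIV. D (axis l 1) $ k) \<le> - eps" for l
  proof (rule tendsto_upperbound[OF tendsto_sum[OF quot_limit[OF hD]]])
    show "\<forall>\<^sub>F h in at_right 0. (\<Sum>k\<in>UNIV. (Phi J K (z + h *\<^sub>R axis l 1) $ k - Phi J K z $ k) / h) \<le> - eps"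
      using step_in_cube[OF z, of l]
    proof (rule eventually_mono)
      fix h assume h: "0 < h \<and> z + h *\<^sub>R axis l 1 \<in> cube y0 \<delta>"
      have "(\<Sum>k\<in>UNIV. Phi J K (z + h *\<^sub>R axis l 1) $ k - Phi J K z $ k) \<le> - eps * h"
        by (rule jac_colsum[OF z _ refl]) (use h in auto)
      then have "(\<Sum>k\<in>UNIV. Phi J K (z + h *\<^sub>R axis l 1) $ k - Phi J K z $ k) / h \<le> - eps"
        using h by (simp add: divide_le_eq)
      then show "(\<Sum>k\<in>UNIV. (Phi J K (z + h *\<^sub>R axis l 1) $ k - Phi J K z $ k) / h) \<le> - eps"
        by (simp add: sum_divide_distrib)
    qed
  qed simp
  show ?thesis unfolding D_def[symmetric] Cset_def using off col by (auto simp: mat)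
qed

end


lemma l1_norm: "(\<Sum>i\<in>UNIV. \<bar>(v::real^'n) $ i\<bar>) \<le> real CARD('n) * norm v"
proof -
  have "(\<Sum>i\<in>UNIV. \<bar>v $ i\<bar>) \<le> (\<Sum>i\<in>(UNIV::'n set). norm v)" by (rule sum_mono) (rule component_le_norm_cart)
  then show ?thesis by simp
qed

context LS2
begin

lemma clarke_full:
  assumes x: "x \<in> cube y0 \<delta>"
  shows "full_rank_set (clarke_derivative (Yset J K) (Phi J K) x)"
proof -
  let ?S = "{A. \<exists>xs r. (\<forall>k. xs k \<in> Yset J K \<and> Phi J K differentiable (at (xs k))) \<and> xs \<longlonglongrightarrow> x \<and>
              strict_mono r \<and> (\<lambda>k. matrix (frechet_derivative (Phi J K) (at (xs (r k))))) \<longlonglongrightarrow> A}"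
  have "?S \<subseteq> Cset eps"
  proof
    fix A assume "A \<in> ?S"
    then obtain xs r where xs: "\<And>k. xs k \<in> Yset J K \<and> Phi J K differentiable (at (xs k))" "xs \<longlonglongrightarrow> x"
      "strict_mono r" and lim: "(\<lambda>k. matrix (frechet_derivative (Phi J K) (at (xs (r k))))) \<longlonglongrightarrow> A" by blast
    have "(xs \<circ> r) \<longlonglongrightarrow> x" by (rule LIMSEQ_subseq_LIMSEQ[OF xs(2) xs(3)])
    then have ev: "eventually (\<lambda>k. (xs \<circ> r) k \<in> cube y0 \<delta>) sequentially"
      by (rule topological_tendstoD[OF _ open_cube x])
    have "eventually (\<lambda>k. matrix (frechet_derivative (Phi J K) (at (xs (r k)))) \<in> Cset eps) sequentially"
      using ev by (rule eventually_mono) (use jac_in_C xs(1) in auto)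
    then show "A \<in> Cset eps" by (rule Lim_in_closed_set[OF Cset_closed _ _ lim]) simp
  qed
  then have "clarke_derivative (Yset J K) (Phi J K) x \<subseteq> Cset eps"
    unfolding clarke_derivative_def by (rule hull_minimal) (rule Cset_convex)
  then show ?thesis unfolding full_rank_set_def using Cset_rank eps(1) by blast
qed

lemma cube_sub_Y: "cube y0 \<delta> \<subseteq> Yset J K"
  using cube_ok unfolding Yset_def by auto

lemma lip_up:
  assumes a: "a \<in> cube y0 \<delta>" and b: "b \<in> cube y0 \<delta>"
  shows "dist (Phi J K a) (Phi J K b) \<le> (2 * MT * real CARD('n) * real CARD('n)) * dist a b"
proof -
  let ?n = "real CARD('n)"
  have "dist (Phi J K a) (Phi J K b) = norm (Phi J K b - Phi J K a)" by (simp add: dist_norm norm_minus_commute)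
  also have "\<dots> \<le> (\<Sum>k\<in>UNIV. \<bar>(Phi J K b - Phi J K a) $ k\<bar>)" by (rule norm_le_l1_cart)
  also have "\<dots> \<le> (\<Sum>k\<in>(UNIV::'n set). 2 * MT * (\<Sum>i\<in>UNIV. \<bar>b$i - a$i\<bar>))"
    by (rule sum_mono) (use upper_bound[OF a b] in simp)
  also have "\<dots> = ?n * (2 * MT) * (\<Sum>i\<in>UNIV. \<bar>(b - a)$i\<bar>)" by simp
  also have "\<dots> \<le> ?n * (2 * MT) * (?n * norm (b - a))"
    by (rule mult_left_mono[OF l1_norm]) (use MT(1) in auto)
  also have "\<dots> = (2 * MT * ?n * ?n) * dist a b" by (simp add: dist_norm norm_minus_commute)
  finally show ?thesis .
qed

lemma lip_low:
  assumes a: "a \<in> cube y0 \<delta>" and b: "b \<in> cube y0 \<delta>"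
  shows "dist a b \<le> (real CARD('n) / eps) * dist (Phi J K a) (Phi J K b)"
proof -
  let ?n = "real CARD('n)"
  have "eps * dist a b \<le> eps * (\<Sum>i\<in>UNIV. \<bar>b$i - a$i\<bar>)"
  proof -
    have "dist a b = norm (b - a)" by (simp add: dist_norm norm_minus_commute)
    also have "\<dots> \<le> (\<Sum>i\<in>UNIV. \<bar>(b - a) $ i\<bar>)" by (rule norm_le_l1_cart)
    finally show ?thesis using eps(1) by (intro mult_left_mono) auto
  qed
  also have "\<dots> \<le> (\<Sum>i\<in>UNIV. \<bar>Phi J K b $ i - Phi J K a $ i\<bar>)" by (rule lower_bound[OF a b])
  also have "\<dots> = (\<Sum>i\<in>UNIV. \<bar>(Phi J K b - Phi J K a) $ i\<bar>)" by simp
  also have "\<dots> \<le> ?n * norm (Phi J K b - Phi J K a)" by (rule l1_norm)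
  also have "\<dots> = ?n * dist (Phi J K a) (Phi J K b)" by (simp add: dist_norm norm_minus_commute)
  finally have "eps * dist a b \<le> ?n * dist (Phi J K a) (Phi J K b)" .
  then show ?thesis using eps(1) by (simp add: field_simps)
qed

lemma local_homeo:
  "\<exists>U V g L. open U \<and> y0 \<in> U \<and> U \<subseteq> Yset J K \<and> open V \<and>
            homeomorphism U V (Phi J K) g \<and> L > 0 \<and>
            (\<forall>a\<in>U. \<forall>b\<in>U. dist a b \<le> L * dist (Phi J K a) (Phi J K b) \<and>
                           dist (Phi J K a) (Phi J K b) \<le> L * dist a b)"
proof -
  let ?n = "real CARD('n)"
  let ?U = "cube y0 \<delta>"
  let ?f = "Phi J K"
  define L1 where "L1 = 2 * MT * ?n * ?n"
  define L2 where "L2 = ?n / eps"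
  have L1: "L1 \<ge> 0" unfolding L1_def using MT(1) by simp
  have L2: "L2 \<ge> 0" unfolding L2_def using eps(1) by simp
  have y0U: "y0 \<in> ?U" unfolding cube_def using cst by simp
  have injf: "inj_on ?f ?U"
  proof (rule inj_onI)
    fix a b assume a: "a \<in> ?U" and b: "b \<in> ?U" and e: "?f a = ?f b"
    have "dist a b \<le> L2 * dist (?f a) (?f b)" using lip_low[OF a b] unfolding L2_def .
    then show "a = b" using e by simp
  qed
  have contf: "continuous_on ?U ?f"
    by (rule lipschitz_on_continuous_on[of L1]) (rule lipschitz_onI, use lip_up L1 in \<open>auto simp: L1_def\<close>)
  have openV: "open (?f ` ?U)" by (rule invariance_of_domain[OF contf open_cube injf])
  define g where "g = inv_into ?U ?f"
  have gf: "g (?f x) = x" if "x \<in> ?U" for x unfolding g_def using injf that by simp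
  have fg: "?f (g y) = y" if "y \<in> ?f ` ?U" for y unfolding g_def using that by (simp add: f_inv_into_f)
  have gU: "g y \<in> ?U" if "y \<in> ?f ` ?U" for y unfolding g_def using that by (simp add: inv_into_into)
  have contg: "continuous_on (?f ` ?U) g"
  proof (rule lipschitz_on_continuous_on[of L2], rule lipschitz_onI)
    fix y1 y2 assume y: "y1 \<in> ?f ` ?U" "y2 \<in> ?f ` ?U"
    then obtain a b where ab: "a \<in> ?U" "b \<in> ?U" "y1 = ?f a" "y2 = ?f b" by blast
    show "dist (g y1) (g y2) \<le> L2 * dist y1 y2" using lip_low[OF ab(1,2)] ab gf unfolding L2_def by simp
  qed (rule L2)
  have homeo: "homeomorphism ?U (?f ` ?U) ?f g"
    by (rule homeomorphismI[OF contf contg]) (use gf fg gU in auto)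
  define L where "L = max 1 (max L1 L2)"
  show ?thesis
  proof (rule exI[of _ ?U], rule exI[of _ "?f ` ?U"], rule exI[of _ g], rule exI[of _ L], intro conjI ballI)
    show "open ?U" by (rule open_cube)
    show "y0 \<in> ?U" by (rule y0U)
    show "?U \<subseteq> Yset J K" by (rule cube_sub_Y)
    show "open (?f ` ?U)" by (rule openV)
    show "homeomorphism ?U (?f ` ?U) ?f g" by (rule homeo)
    show "L > 0" unfolding L_def by simp
    fix a b assume a: "a \<in> ?U" and b: "b \<in> ?U"
    have "dist a b \<le> L2 * dist (?f a) (?f b)" using lip_low[OF a b] unfolding L2_def .
    also have "\<dots> \<le> L * dist (?f a) (?f b)" unfolding L_def by (intro mult_right_mono) auto
    finally show "dist a b \<le> L * dist (?f a) (?f b)" .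
    have "dist (?f a) (?f b) \<le> L1 * dist a b" using lip_up[OF a b] unfolding L1_def .
    also have "\<dots> \<le> L * dist a b" unfolding L_def by (intro mult_right_mono) auto
    finally show "dist (?f a) (?f b) \<le> L * dist a b" .
  qed
qed

end


theorem lemma7p4:
  fixes K :: "'n::{finite,linorder} \<Rightarrow> real \<Rightarrow> ereal"
    and J :: "real \<Rightarrow> ereal"
  assumes kern: "\<And>i. kernel_function (K i)"
    and sing: "\<And>i. singular_kernel (K i)"
    and strict: "\<And>i. strictly_concave_kernel (K i)"
    and pm0: "\<And>i. PM0 (K i)"
    and nfield: "n_field_function CARD('n) J"
    and bdry: "(J 0 = -\<infinity> \<and> (J \<longlongrightarrow> -\<infinity>) (at_right 0)) \<or>
               (J 1 = -\<infinity> \<and> (J \<longlongrightarrow> -\<infinity>) (at_left 1))"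
  shows "(\<forall>y\<in>Yset J K. \<exists>\<delta>>0.
            {x. \<forall>i. \<bar>x $ i - y $ i\<bar> < \<delta>} \<subseteq> Yset J K \<and>
            (\<forall>x. (\<forall>i. \<bar>x $ i - y $ i\<bar> < \<delta>) \<longrightarrow>
                 full_rank_set (clarke_derivative (Yset J K) (Phi J K) x)))
       \<and> (\<forall>y\<in>Yset J K. \<exists>U V g L. open U \<and> y \<in> U \<and> U \<subseteq> Yset J K \<and> open V \<and>
            homeomorphism U V (Phi J K) g \<and> L > 0 \<and>
            (\<forall>a\<in>U. \<forall>b\<in>U. dist a b \<le> L * dist (Phi J K a) (Phi J K b) \<and>
                           dist (Phi J K a) (Phi J K b) \<le> L * dist a b))"
proof -
  interpret LS K J using assms by unfold_locales
  have main: "(\<exists>\<delta>>0. {x. \<forall>i. \<bar>x $ i - y $ i\<bar> < \<delta>} \<subseteq> Yset J K \<and>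
            (\<forall>x. (\<forall>i. \<bar>x $ i - y $ i\<bar> < \<delta>) \<longrightarrow>
                 full_rank_set (clarke_derivative (Yset J K) (Phi J K) x))) \<and>
         (\<exists>U V g L. open U \<and> y \<in> U \<and> U \<subseteq> Yset J K \<and> open V \<and>
            homeomorphism U V (Phi J K) g \<and> L > 0 \<and>
            (\<forall>a\<in>U. \<forall>b\<in>U. dist a b \<le> L * dist (Phi J K a) (Phi J K b) \<and>
                           dist (Phi J K a) (Phi J K b) \<le> L * dist a b))"
    if y: "y \<in> Yset J K" for y
  proof -
    obtain \<delta> \<mu> \<mu>' where c: "0 < \<delta>" "0 < \<mu>" "\<mu> < 1" "0 < \<mu>'" "\<mu>' < 1" "\<delta> \<le> \<mu>/8" "\<delta> \<le> \<mu>'"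
      and c2: "\<forall>x\<in>cube y \<delta>. x \<in> simplexS \<and> (\<forall>i. \<mu>' \<le> x$i \<and> x$i \<le> 1 - \<mu>') \<and>
        (\<forall>j\<le>CARD('n). mfun J K j x \<noteq> -\<infinity> \<and> mfun J K j x \<noteq> \<infinity>)"
      and c3: "\<forall>x\<in>cube y \<delta>. \<forall>j\<le>CARD('n). \<forall>t\<in>{ypt x j..ypt x (Suc j)}. Ffun J K x t > ereal (real_of_ereal (mfun J K j x) - 1) \<longrightarrow>
         J t \<noteq> -\<infinity> \<and> (\<forall>i. \<mu> \<le> \<bar>t - x$i\<bar>)"
      and c4: "(\<forall>x\<in>cube y \<delta>. \<forall>j\<le>CARD('n). \<forall>t\<in>{ypt x j..ypt x (Suc j)}. Ffun J K x t > ereal (real_of_ereal (mfun J K j x) - 1) \<longrightarrow> \<mu> \<le> t) \<or>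
     (\<forall>x\<in>cube y \<delta>. \<forall>j\<le>CARD('n). \<forall>t\<in>{ypt x j..ypt x (Suc j)}. Ffun J K x t > ereal (real_of_ereal (mfun J K j x) - 1) \<longrightarrow> t \<le> 1 - \<mu>)"
      using loc[OF y] by blast
    interpret L2: LS2 K J y \<delta> \<mu> \<mu>'
      by unfold_locales (use c c2 c3 c4 in auto)
    have cu: "{x. \<forall>i. \<bar>x $ i - y $ i\<bar> < \<delta>} = cube y \<delta>" unfolding cube_def by simp
    show ?thesis
    proof
      show "\<exists>\<delta>>0. {x. \<forall>i. \<bar>x $ i - y $ i\<bar> < \<delta>} \<subseteq> Yset J K \<and>
            (\<forall>x. (\<forall>i. \<bar>x $ i - y $ i\<bar> < \<delta>) \<longrightarrow> full_rank_set (clarke_derivative (Yset J K) (Phi J K) x))"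
        using c(1) L2.cube_sub_Y L2.clarke_full unfolding cu by (intro exI[of _ \<delta>]) (auto simp: cube_def)
      show "\<exists>U V g L. open U \<and> y \<in> U \<and> U \<subseteq> Yset J K \<and> open V \<and>
            homeomorphism U V (Phi J K) g \<and> L > 0 \<and>
            (\<forall>a\<in>U. \<forall>b\<in>U. dist a b \<le> L * dist (Phi J K a) (Phi J K b) \<and>
                           dist (Phi J K a) (Phi J K b) \<le> L * dist a b)"
        by (rule L2.local_homeo)
    qed
  qed
  show ?thesis using main by blast
qed


end
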